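(* Let $N\ge2$, $g\ge1$, let $A(z)=\sum_{k=0}^{g-1}z^kA^{(k)}$ ($A^{(g-1)}\neq0$) be a polynomial loop $\mathbb{T}\to\mathrm{U}_N(\mathbb{C})$ of genus $g$ with entries $A_{i,j}(z)$, and let $T_i$ be the operators on $L^2(\mathbb{T})$, $(T_if)(z)=m_i(z)f(z^N)$, $m_i(z)=\sum_{j=0}^{N-1}A_{i,j}(z^N)z^j$. Let $e_n(z)=z^n$, $r_0=\lfloor (gN-1)/(N-1)\rfloor$, $\mathcal{K}_0=\operatorname{span}\{e_{-1},\dots,e_{-r_0}\}$ and $\mathcal{K}_1=\operatorname{span}\{e_0,e_{-1},\dots,e_{-(r_0-1)}\}$. Call a subspace $\mathcal{M}$ cyclic if the closed linear span of $\{T_{i_1}\cdots T_{i_n}\xi: n\ge0,\ i_1,\dots,i_n\in\{0,\dots,N-1\},\ \xi\in\mathcal{M}\}$ is $L^2(\mathbb{T})$. Then: (1) if $T_i^*e_0\in\mathbb{C}e_0$ for all $i$, then $\mathcal{K}_0$ is not cyclic; (2) if $N-1$ divides $gN-1$ and $T_i^*e_{-r_0}\in\mathbb{C}e_{-r_0}$ for all $i$, then $\mathcal{K}_1$ is not cyclic; (3) if $\lambda_0:=\sum_{i}|A^{(0)}_{i,0}|^2=0$, then $\mathcal{K}_0$ is cyclic.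
   Context: $\mathbb{T}$ is the unit circle with normalized Haar measure; $A^{(0)}_{i,0}$ denotes the $(i,0)$ entry of the matrix coefficient $A^{(0)}$ (indices $0,\dots,N-1$). *)

theory Defs
  imports "HOL-Analysis.Analysis"
begin

text \<open>Functions on the unit circle are represented as functions on the complex plane;
  only their values on the unit circle matter. The normalized Haar measure on the
  circle is the pushforward of Lebesgue measure on [0,1] under t maps to cis(2 pi t).\<close>

definition circ :: "real \<Rightarrow> complex" where
  "circ t = cis (2 * pi * t)"

definition L2T :: "(complex \<Rightarrow> complex) set" where
  "L2T = {f. (\<lambda>t. f (circ t)) \<in> borel_measurable (lebesgue_on {0..1}) \<and>
             integrable (lebesgue_on {0..1}) (\<lambda>t. (cmod (f (circ t)))\<^sup>2)}"

definition l2_inner :: "(complex \<Rightarrow> complex) \<Rightarrow> (complex \<Rightarrow> complex) \<Rightarrow> complex" where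
  "l2_inner f g = integral\<^sup>L (lebesgue_on {0..1}) (\<lambda>t. f (circ t) * cnj (g (circ t)))"

definition l2_norm :: "(complex \<Rightarrow> complex) \<Rightarrow> real" where
  "l2_norm f = sqrt (integral\<^sup>L (lebesgue_on {0..1}) (\<lambda>t. (cmod (f (circ t)))\<^sup>2))"

definition e :: "int \<Rightarrow> complex \<Rightarrow> complex" where
  "e n z = z powi n"

text \<open>Polynomial loop A(z) = sum_{k<g} z^k A^(k); Acoef k i j is the (i,j) entry of A^(k).\<close>
definition Aent :: "(nat \<Rightarrow> nat \<Rightarrow> nat \<Rightarrow> complex) \<Rightarrow> nat \<Rightarrow> nat \<Rightarrow> nat \<Rightarrow> complex \<Rightarrow> complex" where
  "Aent Acoef g i j z = (\<Sum>k<g. z ^ k * Acoef k i j)"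

definition unitary_mat :: "nat \<Rightarrow> (nat \<Rightarrow> nat \<Rightarrow> complex) \<Rightarrow> bool" where
  "unitary_mat N U \<longleftrightarrow>
     (\<forall>i<N. \<forall>j<N. (\<Sum>l<N. U i l * cnj (U j l)) = (if i = j then 1 else 0)) \<and>
     (\<forall>i<N. \<forall>j<N. (\<Sum>l<N. cnj (U l i) * U l j) = (if i = j then 1 else 0))"

definition mfun :: "nat \<Rightarrow> nat \<Rightarrow> (nat \<Rightarrow> nat \<Rightarrow> nat \<Rightarrow> complex) \<Rightarrow> nat \<Rightarrow> complex \<Rightarrow> complex" where
  "mfun N g Acoef i z = (\<Sum>j<N. Aent Acoef g i j (z ^ N) * z ^ j)"

definition Top :: "nat \<Rightarrow> nat \<Rightarrow> (nat \<Rightarrow> nat \<Rightarrow> nat \<Rightarrow> complex) \<Rightarrow> nat \<Rightarrow>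
    (complex \<Rightarrow> complex) \<Rightarrow> (complex \<Rightarrow> complex)" where
  "Top N g Acoef i f = (\<lambda>z. mfun N g Acoef i z * f (z ^ N))"

definition Tword :: "nat \<Rightarrow> nat \<Rightarrow> (nat \<Rightarrow> nat \<Rightarrow> nat \<Rightarrow> complex) \<Rightarrow> nat list \<Rightarrow>
    (complex \<Rightarrow> complex) \<Rightarrow> (complex \<Rightarrow> complex)" where
  "Tword N g Acoef w xi = foldr (Top N g Acoef) w xi"

text \<open>T^* v is in C v (adjoint unfolded through the inner product): there is c with
  T^* v = c v, i.e. <T f, v> = <f, c v> for all f in L^2.\<close>
definition adj_eigvec :: "((complex \<Rightarrow> complex) \<Rightarrow> (complex \<Rightarrow> complex)) \<Rightarrow> (complex \<Rightarrow> complex) \<Rightarrow> bool" where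
  "adj_eigvec T v \<longleftrightarrow> (\<exists>c. \<forall>f\<in>L2T. l2_inner (T f) v = l2_inner f (\<lambda>z. c * v z))"

definition clin_span :: "(complex \<Rightarrow> complex) set \<Rightarrow> (complex \<Rightarrow> complex) set" where
  "clin_span S = {(\<lambda>z. \<Sum>x\<in>F. c x * x z) | F c. finite F \<and> F \<subseteq> S}"

definition cyclic :: "nat \<Rightarrow> nat \<Rightarrow> (nat \<Rightarrow> nat \<Rightarrow> nat \<Rightarrow> complex) \<Rightarrow> (complex \<Rightarrow> complex) set \<Rightarrow> bool" where
  "cyclic N g Acoef M \<longleftrightarrow>
     (\<forall>f\<in>L2T. \<forall>\<epsilon>>0. \<exists>h\<in>clin_span {Tword N g Acoef w xi | w xi. set w \<subseteq> {..<N} \<and> xi \<in> M}.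
        l2_norm (\<lambda>z. f z - h z) < \<epsilon>)"

end

theory Submission
  imports Defs
begin

lemma circ_norm [simp]: "cmod (circ t) = 1"
  by (simp add: circ_def)

lemma circ_nonzero [simp]: "circ t \<noteq> 0"
  using circ_norm[of t] by (metis norm_zero zero_neq_one)

lemma circ_power: "circ t ^ N = circ (real N * t)"
proof -
  have "cis (2*pi*t) ^ N = cis (real N * (2*pi*t))" by (rule Complex.DeMoivre)
  then show ?thesis by (simp add: circ_def mult_ac)
qed

lemma circ_powi: "circ t powi n = cis (2 * pi * (real_of_int n * t))"
  by (simp add: circ_def cis_power_int mult_ac)

lemma circ_cont [continuous_intros]: "continuous_on S circ"
  unfolding circ_def cis_conv_exp by (intro continuous_intros)

lemma cis_int_has_integral:
  fixes k :: int
  shows "((\<lambda>t. cis (2 * pi * (real_of_int k * t))) has_integral (if k = 0 then 1 else 0)) {0..1::real}"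
proof (cases "k = 0")
  case True
  then show ?thesis using has_integral_const_real[of "1::complex" 0 1] by simp
next
  case False
  define c where "c = \<i> * complex_of_real (2 * pi * real_of_int k)"
  have c0: "c \<noteq> 0" using False by (simp add: c_def)
  have d: "((\<lambda>t. exp (c * of_real t) / c) has_vector_derivative cis (2 * pi * (real_of_int k * t))) (at t within {0..1})" for t
  proof -
    have "((\<lambda>z. exp (c * z) / c) has_field_derivative (c * exp (c * of_real t)) / c) (at (of_real t))"
      by (auto intro!: derivative_eq_intros)
    from has_vector_derivative_real_field[OF this]
    have "((\<lambda>t. exp (c * of_real t) / c) has_vector_derivative (c * exp (c * of_real t)) / c) (at t within {0..1})" .
    moreover have "(c * exp (c * of_real t)) / c = cis (2 * pi * (real_of_int k * t))"
      using c0 by (simp add: c_def cis_conv_exp mult_ac)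
    ultimately show ?thesis by simp
  qed
  have "((\<lambda>t. cis (2 * pi * (real_of_int k * t))) has_integral (exp (c * of_real 1) / c - exp (c * of_real 0) / c)) {0..1::real}"
    by (rule fundamental_theorem_of_calculus) (use d in auto)
  moreover have "exp (c * of_real 1) = 1"
  proof -
    have "exp (c * of_real 1) = cis (2 * pi * real_of_int k)" by (simp add: c_def cis_conv_exp mult_ac)
    also have "\<dots> = 1" by (simp add: cis_multiple_2pi)
    finally show ?thesis .
  qed
  ultimately show ?thesis using False by simp
qed

definition ccirc :: "(complex \<Rightarrow> complex) \<Rightarrow> bool" where
  "ccirc h \<longleftrightarrow> continuous_on UNIV (\<lambda>t. h (circ t))"

lemma e_circ: "e n (circ t) = cis (2 * pi * (real_of_int n * t))"
  by (simp add: e_def circ_powi)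

lemma ccirc_e: "ccirc (e n)"
  unfolding ccirc_def e_circ cis_conv_exp by (intro continuous_intros)

lemma ccirc_span:
  assumes "finite F" "\<And>x. x \<in> F \<Longrightarrow> ccirc x"
  shows "ccirc (\<lambda>z. \<Sum>x\<in>F. c x * x z)"
  using assms unfolding ccirc_def by (intro continuous_intros) auto

lemma ccirc_clin_span:
  assumes "\<And>x. x \<in> S \<Longrightarrow> ccirc x" "h \<in> clin_span S"
  shows "ccirc h"
  using assms ccirc_span unfolding clin_span_def by blast

lemma mfun_cont: "continuous_on S (mfun N g Acoef i)"
  unfolding mfun_def Aent_def by (intro continuous_intros)

lemma ccirc_Top:
  assumes "ccirc h"
  shows "ccirc (Top N g Acoef i h)"
proof -
  have "continuous_on UNIV (\<lambda>t. h (circ (real N * t)))"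
    using assms unfolding ccirc_def
    by (rule continuous_on_compose2[where g="\<lambda>t. h (circ t)" and f="\<lambda>t. real N * t"]) (auto intro!: continuous_intros)
  moreover have "continuous_on UNIV (\<lambda>t. mfun N g Acoef i (circ t))"
    by (rule continuous_on_compose2[OF mfun_cont circ_cont]) auto
  ultimately show ?thesis
    unfolding ccirc_def Top_def circ_power by (intro continuous_intros)
qed

lemma ccirc_Tword:
  assumes "ccirc h"
  shows "ccirc (Tword N g Acoef w h)"
  unfolding Tword_def by (induction w) (auto simp: assms ccirc_Top)

lemma ccirc_integrable:
  assumes "ccirc h"
  shows "integrable (lebesgue_on {0..1}) (\<lambda>t. h (circ t))"
  using assms unfolding ccirc_def
  by (intro continuous_imp_integrable_real) (auto intro: continuous_on_subset)

lemma ccirc_mult: "ccirc f \<Longrightarrow> ccirc g \<Longrightarrow> ccirc (\<lambda>z. f z * g z)"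
  unfolding ccirc_def by (intro continuous_intros)

lemma ccirc_cnj: "ccirc f \<Longrightarrow> ccirc (\<lambda>z. cnj (f z))"
  unfolding ccirc_def by (intro continuous_intros)

lemma ccirc_diff: "ccirc f \<Longrightarrow> ccirc g \<Longrightarrow> ccirc (\<lambda>z. f z - g z)"
  unfolding ccirc_def by (intro continuous_intros)

lemma ccirc_L2T:
  assumes "ccirc h"
  shows "h \<in> L2T"
proof -
  have c: "continuous_on UNIV (\<lambda>t. h (circ t))" using assms by (simp add: ccirc_def)
  have "(\<lambda>t. h (circ t)) \<in> borel_measurable (lebesgue_on {0..1})"
    by (rule continuous_imp_measurable_on_sets_lebesgue) (auto intro: continuous_on_subset[OF c])
  moreover have "integrable (lebesgue_on {0..1}) (\<lambda>t. (cmod (h (circ t)))\<^sup>2)"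
    by (intro continuous_imp_integrable_real continuous_intros continuous_on_subset[OF c]) auto
  ultimately show ?thesis by (simp add: L2T_def)
qed

lemma l2_inner_e_e: "l2_inner (e m) (e n) = (if m = n then 1 else 0)"
proof -
  have eq: "e m (circ t) * cnj (e n (circ t)) = cis (2 * pi * (real_of_int (m - n) * t))" for t
    by (simp add: e_circ cis_cnj cis_mult cis_divide[symmetric] divide_complex_def[symmetric] algebra_simps)
  have "integrable (lebesgue_on {0..1}) (\<lambda>t. cis (2 * pi * (real_of_int (m - n) * t)))"
    by (intro continuous_imp_integrable_real) (auto simp: cis_conv_exp intro!: continuous_intros)
  then have "l2_inner (e m) (e n) = integral {0..1} (\<lambda>t. cis (2 * pi * (real_of_int (m - n) * t)))"
    unfolding l2_inner_def eq by (simp add: lebesgue_integral_eq_integral)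
  also have "\<dots> = (if m = n then 1 else 0)"
    using cis_int_has_integral[of "m - n"] by (simp add: integral_unique)
  finally show ?thesis .
qed

lemma l2_inner_sum_left:
  assumes "finite F" "\<And>x. x \<in> F \<Longrightarrow> ccirc x" "ccirc v"
  shows "l2_inner (\<lambda>z. \<Sum>x\<in>F. c x * x z) v = (\<Sum>x\<in>F. c x * l2_inner x v)"
proof -
  have "l2_inner (\<lambda>z. \<Sum>x\<in>F. c x * x z) v =
        integral\<^sup>L (lebesgue_on {0..1}) (\<lambda>t. \<Sum>x\<in>F. c x * (x (circ t) * cnj (v (circ t))))"
    unfolding l2_inner_def by (simp add: sum_distrib_right sum_distrib_left mult_ac)
  also have "\<dots> = (\<Sum>x\<in>F. integral\<^sup>L (lebesgue_on {0..1}) (\<lambda>t. c x * (x (circ t) * cnj (v (circ t)))))"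
  proof (rule Bochner_Integration.integral_sum)
    fix x assume "x \<in> F"
    then have "ccirc (\<lambda>z. x z * cnj (v z))" by (intro ccirc_mult ccirc_cnj assms)
    from ccirc_integrable[OF this]
    show "integrable (lebesgue_on {0..1}) (\<lambda>t. c x * (x (circ t) * cnj (v (circ t))))"
      by (intro integrable_mult_right) simp
  qed
  also have "\<dots> = (\<Sum>x\<in>F. c x * l2_inner x v)"
    unfolding l2_inner_def by simp
  finally show ?thesis .
qed

lemma l2_inner_scale_right: "l2_inner f (\<lambda>z. c * v z) = cnj c * l2_inner f v"
  unfolding l2_inner_def by (simp add: mult_ac)

lemma int_one: "integral\<^sup>L (lebesgue_on {0..1::real}) (\<lambda>t. 1::real) = 1"
  by (simp add: lebesgue_integral_const measure_restrict_space)

lemma cmod_diff_sq: "(cmod (a - b))\<^sup>2 = (cmod a)\<^sup>2 + (cmod b)\<^sup>2 - 2 * Re (b * cnj a)"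
  by (simp add: cmod_power2) (simp add: power2_eq_square algebra_simps)

lemma not_cyclic_gen:
  assumes v: "ccirc v" "\<And>t. cmod (v (circ t)) = 1"
    and G: "\<And>x. x \<in> G \<Longrightarrow> ccirc x \<and> l2_inner x v = 0"
  shows "\<exists>f\<in>L2T. \<exists>\<epsilon>>0. \<forall>h\<in>clin_span G. \<not> l2_norm (\<lambda>z. f z - h z) < \<epsilon>"
proof (intro bexI exI conjI allI ballI)
  show "v \<in> L2T" using v by (simp add: ccirc_L2T)
  show "(1::real) > 0" by simp
  fix h assume "h \<in> clin_span G"
  then obtain F c where F: "finite F" "F \<subseteq> G" and h: "h = (\<lambda>z. \<Sum>x\<in>F. c x * x z)"
    unfolding clin_span_def by blast
  have cF: "\<And>x. x \<in> F \<Longrightarrow> ccirc x" using F G by blast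
  have ch: "ccirc h" unfolding h by (rule ccirc_span[OF F(1) cF])
  have inner0: "l2_inner h v = 0"
    unfolding h using F G by (subst l2_inner_sum_left[OF F(1) cF v(1)]) (auto intro!: sum.neutral)
  define p where "p = (\<lambda>t. h (circ t) * cnj (v (circ t)))"
  have ip: "integrable (lebesgue_on {0..1}) p"
    unfolding p_def by (intro ccirc_integrable ccirc_mult ccirc_cnj ch v)
  have ip0: "integral\<^sup>L (lebesgue_on {0..1}) p = 0"
    using inner0 by (simp add: l2_inner_def p_def)
  have pw: "1 - 2 * Re (p t) \<le> (cmod (v (circ t) - h (circ t)))\<^sup>2" for t
  proof -
    have "(cmod (v (circ t) - h (circ t)))\<^sup>2 = (cmod (v (circ t)))\<^sup>2 + (cmod (h (circ t)))\<^sup>2 - 2 * Re (h (circ t) * cnj (v (circ t)))"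
      by (rule cmod_diff_sq)
    then show ?thesis using v(2)[of t] by (simp add: p_def)
  qed
  have i2: "integrable (lebesgue_on {0..1}) (\<lambda>t. (cmod (v (circ t) - h (circ t)))\<^sup>2)"
  proof -
    have "ccirc (\<lambda>z. v z - h z)" by (intro ccirc_diff ch v)
    then have "continuous_on UNIV (\<lambda>t. v (circ t) - h (circ t))" by (simp add: ccirc_def)
    then have "continuous_on {0..1} (\<lambda>t. v (circ t) - h (circ t))" by (rule continuous_on_subset) auto
    then show ?thesis
      by (intro continuous_imp_integrable_real continuous_on_power continuous_on_norm)
  qed
  have "integral\<^sup>L (lebesgue_on {0..1}) (\<lambda>t. 1 - 2 * Re (p t)) = 1"
  proof -
    have "integral\<^sup>L (lebesgue_on {0..1}) (\<lambda>t. 1 - 2 * Re (p t)) =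
          integral\<^sup>L (lebesgue_on {0..1::real}) (\<lambda>t. 1::real) - integral\<^sup>L (lebesgue_on {0..1}) (\<lambda>t. 2 * Re (p t))"
    proof (rule Bochner_Integration.integral_diff)
      show "integrable (lebesgue_on {0..1::real}) (\<lambda>t. 1::real)"
        by (rule continuous_imp_integrable_real) simp
      show "integrable (lebesgue_on {0..1}) (\<lambda>t. 2 * Re (p t))"
        using ip by (intro integrable_mult_right integrable_Re)
    qed
    also have "\<dots> = 1 - 2 * Re (integral\<^sup>L (lebesgue_on {0..1}) p)"
      using ip by (simp add: integral_Re measure_restrict_space)
    finally show ?thesis using ip0 by simp
  qed
  moreover have "integral\<^sup>L (lebesgue_on {0..1}) (\<lambda>t. 1 - 2 * Re (p t)) \<le>
                 integral\<^sup>L (lebesgue_on {0..1}) (\<lambda>t. (cmod (v (circ t) - h (circ t)))\<^sup>2)"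
    by (rule integral_mono) (use ip i2 pw in auto)
  ultimately have "1 \<le> integral\<^sup>L (lebesgue_on {0..1}) (\<lambda>t. (cmod (v (circ t) - h (circ t)))\<^sup>2)"
    by simp
  then show "\<not> l2_norm (\<lambda>z. v z - h z) < 1"
    by (simp add: l2_norm_def)
qed


lemma Tword_Cons: "Tword N g Acoef (i # w) xi = Top N g Acoef i (Tword N g Acoef w xi)"
  by (simp add: Tword_def)

lemma Tword_Nil: "Tword N g Acoef [] xi = xi"
  by (simp add: Tword_def)

lemma not_cyclic_eig:
  assumes eig: "\<forall>i<N. adj_eigvec (Top N g Acoef i) (e k)"
    and M: "\<And>xi. xi \<in> M \<Longrightarrow> ccirc xi \<and> l2_inner xi (e k) = 0"
  shows "\<not> cyclic N g Acoef M"
proof -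
  have gen: "ccirc (Tword N g Acoef w xi) \<and> l2_inner (Tword N g Acoef w xi) (e k) = 0"
    if "set w \<subseteq> {..<N}" "xi \<in> M" for w xi
    using that(1)
  proof (induction w)
    case Nil
    then show ?case using M[OF that(2)] by (simp add: Tword_Nil)
  next
    case (Cons i w)
    then have IH: "ccirc (Tword N g Acoef w xi)" "l2_inner (Tword N g Acoef w xi) (e k) = 0"
      and i: "i < N" by auto
    obtain c where c: "\<forall>f\<in>L2T. l2_inner (Top N g Acoef i f) (e k) = l2_inner f (\<lambda>z. c * e k z)"
      using eig i unfolding adj_eigvec_def by blast
    have "l2_inner (Top N g Acoef i (Tword N g Acoef w xi)) (e k) = 0"
      using c IH ccirc_L2T by (simp add: l2_inner_scale_right)
    then show ?case using IH by (simp add: Tword_Cons ccirc_Top)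
  qed
  have "\<exists>f\<in>L2T. \<exists>\<epsilon>>0. \<forall>h\<in>clin_span {Tword N g Acoef w xi | w xi. set w \<subseteq> {..<N} \<and> xi \<in> M}.
          \<not> l2_norm (\<lambda>z. f z - h z) < \<epsilon>"
    by (rule not_cyclic_gen[OF ccirc_e[of k]]) (auto simp: e_circ gen)
  then show ?thesis unfolding cyclic_def by blast
qed

lemma span_e_orth:
  assumes "\<And>n. n \<in> S \<Longrightarrow> n \<noteq> k"
    and "xi \<in> clin_span {e n | n. n \<in> S}"
  shows "ccirc xi \<and> l2_inner xi (e k) = 0"
proof -
  obtain F c where F: "finite F" "F \<subseteq> {e n | n. n \<in> S}" and xi: "xi = (\<lambda>z. \<Sum>x\<in>F. c x * x z)"
    using assms(2) unfolding clin_span_def by blast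
  have cF: "\<And>x. x \<in> F \<Longrightarrow> ccirc x" using F ccirc_e by blast
  have "l2_inner xi (e k) = (\<Sum>x\<in>F. c x * l2_inner x (e k))"
    unfolding xi by (rule l2_inner_sum_left[OF F(1) cF ccirc_e])
  also have "\<dots> = 0"
  proof (rule sum.neutral, rule ballI)
    fix x assume "x \<in> F"
    then obtain n where "x = e n" "n \<in> S" using F by blast
    then show "c x * l2_inner x (e k) = 0" using assms(1) by (simp add: l2_inner_e_e)
  qed
  finally show ?thesis using xi ccirc_span[OF F(1) cF] by simp
qed

lemma part1:
  assumes "\<forall>i<N. adj_eigvec (Top N g Acoef i) (e 0)"
  shows "\<not> cyclic N g Acoef (clin_span {e (- int n) | n. 1 \<le> n \<and> n \<le> r0})"
proof -
  have eq: "{e (- int n) | n. 1 \<le> n \<and> n \<le> r0} = {e m | m. m \<in> {- int n | n. 1 \<le> n \<and> n \<le> r0}}"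
    by blast
  show ?thesis
    by (rule not_cyclic_eig[OF assms], unfold eq, rule span_e_orth[where S="{- int n | n. 1 \<le> n \<and> n \<le> r0}"]) auto
qed

lemma part2:
  assumes "\<forall>i<N. adj_eigvec (Top N g Acoef i) (e (- int r0))" "r0 \<ge> 1"
  shows "\<not> cyclic N g Acoef (clin_span {e (- int n) | n. n \<le> r0 - 1})"
proof -
  have eq: "{e (- int n) | n. n \<le> r0 - 1} = {e m | m. m \<in> {- int n | n. n \<le> r0 - 1}}"
    by blast
  show ?thesis
    by (rule not_cyclic_eig[OF assms(1)], unfold eq, rule span_e_orth[where S="{- int n | n. n \<le> r0 - 1}"]) (use assms(2) in auto)
qed

lemma span_gen:
  assumes "finite J" "\<And>j. j \<in> J \<Longrightarrow> f j \<in> S"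
  shows "(\<lambda>z. \<Sum>j\<in>J. c j * f j z) \<in> clin_span S"
proof -
  define c' where "c' y = (\<Sum>j\<in>{j\<in>J. f j = y}. c j)" for y
  have "(\<lambda>z. \<Sum>j\<in>J. c j * f j z) = (\<lambda>z. \<Sum>y\<in>f ` J. c' y * y z)"
  proof
    fix z
    have "(\<Sum>j\<in>J. c j * f j z) = (\<Sum>y\<in>f ` J. \<Sum>j\<in>{j\<in>J. f j = y}. c j * f j z)"
      by (rule sum.image_gen[OF assms(1)])
    also have "\<dots> = (\<Sum>y\<in>f ` J. c' y * y z)"
      unfolding c'_def sum_distrib_right by (intro sum.cong refl) auto
    finally show "(\<Sum>j\<in>J. c j * f j z) = (\<Sum>y\<in>f ` J. c' y * y z)" .
  qed
  moreover have "finite (f ` J)" "f ` J \<subseteq> S" using assms by auto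
  ultimately show ?thesis unfolding clin_span_def by blast
qed

lemma span_elem: "x \<in> S \<Longrightarrow> x \<in> clin_span S"
  using span_gen[of "{()}" "\<lambda>_. x" S "\<lambda>_. 1"] by simp

lemma span_zero: "(\<lambda>z. 0) \<in> clin_span S"
  using span_gen[of "{}" "\<lambda>_. undefined" S "\<lambda>_. 1"] by simp

lemma span_add:
  assumes "u \<in> clin_span S" "v \<in> clin_span S"
  shows "(\<lambda>z. u z + v z) \<in> clin_span S"
proof -
  obtain F1 c1 where F1: "finite F1" "F1 \<subseteq> S" and u: "u = (\<lambda>z. \<Sum>x\<in>F1. c1 x * x z)"
    using assms(1) unfolding clin_span_def by blast
  obtain F2 c2 where F2: "finite F2" "F2 \<subseteq> S" and v: "v = (\<lambda>z. \<Sum>x\<in>F2. c2 x * x z)"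
    using assms(2) unfolding clin_span_def by blast
  define f where "f = case_sum (\<lambda>x. x) (\<lambda>x::complex\<Rightarrow>complex. x)"
  define c where "c = case_sum c1 c2"
  have "(\<lambda>z. \<Sum>j\<in>F1 <+> F2. c j * f j z) \<in> clin_span S"
    by (rule span_gen) (use F1 F2 in \<open>auto simp: f_def\<close>)
  moreover have "(\<lambda>z. \<Sum>j\<in>F1 <+> F2. c j * f j z) = (\<lambda>z. u z + v z)"
    using F1 F2 by (simp add: sum.Plus u v c_def f_def)
  ultimately show ?thesis by simp
qed

lemma span_scale:
  assumes "u \<in> clin_span S"
  shows "(\<lambda>z. a * u z) \<in> clin_span S"
proof -
  obtain F c where F: "finite F" "F \<subseteq> S" and u: "u = (\<lambda>z. \<Sum>x\<in>F. c x * x z)"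
    using assms(1) unfolding clin_span_def by blast
  have "(\<lambda>z. \<Sum>x\<in>F. (\<lambda>x. a * c x) x * x z) \<in> clin_span S"
    using F unfolding clin_span_def by (intro CollectI exI[of _ F] exI[of _ "\<lambda>x. a * c x"]) simp
  then show ?thesis unfolding u by (simp add: sum_distrib_left mult_ac)
qed

lemma span_sum:
  assumes "finite J" "\<And>j. j \<in> J \<Longrightarrow> f j \<in> clin_span S"
  shows "(\<lambda>z. \<Sum>j\<in>J. c j * f j z) \<in> clin_span S"
  using assms
proof (induction J rule: finite_induct)
  case empty
  then show ?case using span_zero by simp
next
  case (insert j J)
  have "(\<lambda>z. c j * f j z + (\<Sum>j\<in>J. c j * f j z)) \<in> clin_span S"
    using insert by (intro span_add span_scale) auto
  then show ?case using insert by simp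
qed

definition Sfun :: "nat \<Rightarrow> nat \<Rightarrow> (nat \<Rightarrow> nat \<Rightarrow> nat \<Rightarrow> complex) \<Rightarrow> nat \<Rightarrow> int \<Rightarrow> complex \<Rightarrow> complex" where
  "Sfun N g Acoef i n = (\<lambda>u. \<Sum>q<g. cnj (Acoef q i (nat (n mod int N))) * e (n div int N - int q) u)"

lemma powi_diff_unit:
  assumes "cmod w = 1"
  shows "w powi (d - int q) = w powi d * cnj w ^ q"
proof -
  have w0: "w \<noteq> 0" using assms by auto
  have "w powi (d - int q) = w powi d / w ^ q"
    using w0 by (subst power_int_diff) auto
  also have "\<dots> = w powi d * inverse w ^ q"
    by (simp add: divide_inverse power_inverse)
  also have "inverse w = cnj w"
  proof (rule inverse_unique)
    have "w * cnj w = complex_of_real ((cmod w)\<^sup>2)" by (rule complex_norm_square[symmetric])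
    then show "w * cnj w = 1" using assms by simp
  qed
  finally show ?thesis .
qed

lemma Sfun_eval:
  assumes "cmod w = 1"
  shows "Sfun N g Acoef i n w = w powi (n div int N) * cnj (Aent Acoef g i (nat (n mod int N)) w)"
  unfolding Sfun_def Aent_def e_def
  by (simp add: powi_diff_unit[OF assms] sum_distrib_left mult_ac)

lemma cuntz:
  assumes N: "N \<ge> 1"
    and loop: "\<And>z. cmod z = 1 \<Longrightarrow> unitary_mat N (\<lambda>i j. Aent Acoef g i j z)"
    and z: "cmod z = 1"
  shows "(\<Sum>i<N. Top N g Acoef i (Sfun N g Acoef i n) z) = e n z"
proof -
  define w where "w = z ^ N"
  have w: "cmod w = 1" using z by (simp add: w_def norm_power)
  define j0 where "j0 = nat (n mod int N)"
  define d where "d = n div int N"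
  have j0N: "j0 < N" using N by (simp add: j0_def nat_less_iff)
  have n_eq: "n = int N * d + int j0" using N by (simp add: d_def j0_def)
  have U: "(\<Sum>l<N. cnj (Aent Acoef g l j0 w) * Aent Acoef g l j w) = (if j0 = j then 1 else 0)"
    if "j < N" for j
    using loop[OF w] j0N that unfolding unitary_mat_def by blast
  have "(\<Sum>i<N. Top N g Acoef i (Sfun N g Acoef i n) z)
      = (\<Sum>i<N. (\<Sum>j<N. Aent Acoef g i j w * z ^ j) * (w powi d * cnj (Aent Acoef g i j0 w)))"
    unfolding Top_def mfun_def w_def[symmetric] Sfun_eval[OF w] d_def j0_def ..
  also have "\<dots> = (\<Sum>i<N. \<Sum>j<N. w powi d * (z ^ j * (cnj (Aent Acoef g i j0 w) * Aent Acoef g i j w)))"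
    by (rule sum.cong[OF refl]) (simp add: sum_distrib_left sum_distrib_right mult_ac)
  also have "\<dots> = (\<Sum>j<N. \<Sum>i<N. w powi d * (z ^ j * (cnj (Aent Acoef g i j0 w) * Aent Acoef g i j w)))"
    by (rule sum.swap)
  also have "\<dots> = w powi d * (\<Sum>j<N. z ^ j * (\<Sum>i<N. cnj (Aent Acoef g i j0 w) * Aent Acoef g i j w))"
    by (simp only: sum_distrib_left)
  also have "\<dots> = w powi d * (\<Sum>j<N. z ^ j * (if j0 = j then 1 else 0))"
    by (simp add: U)
  also have "\<dots> = w powi d * z ^ j0"
  proof -
    have "(\<Sum>j<N. z ^ j * (if j0 = j then 1 else 0)) = (\<Sum>j<N. if j = j0 then z ^ j else 0)"
      by (rule sum.cong) auto
    also have "\<dots> = z ^ j0" using j0N by (simp add: sum.delta)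
    finally show ?thesis by simp
  qed
  also have "\<dots> = z powi n"
  proof -
    have z0: "z \<noteq> 0" using z by auto
    have "w powi d = z powi (int N * d)" unfolding w_def
      by (simp add: power_int_mult power_int_of_nat[symmetric] del: power_int_of_nat)
    then show ?thesis using z0 by (simp add: n_eq power_int_add)
  qed
  finally show ?thesis by (simp add: e_def)
qed

definition gens :: "nat \<Rightarrow> nat \<Rightarrow> (nat \<Rightarrow> nat \<Rightarrow> nat \<Rightarrow> complex) \<Rightarrow> (complex \<Rightarrow> complex) set \<Rightarrow> (complex \<Rightarrow> complex) set" where
  "gens N g Acoef K = {Tword N g Acoef w xi | w xi. set w \<subseteq> {..<N} \<and> xi \<in> K}"

definition onV :: "nat \<Rightarrow> nat \<Rightarrow> (nat \<Rightarrow> nat \<Rightarrow> nat \<Rightarrow> complex) \<Rightarrow> (complex \<Rightarrow> complex) set \<Rightarrow> (complex \<Rightarrow> complex) \<Rightarrow> bool" where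
  "onV N g Acoef K h \<longleftrightarrow> (\<exists>v\<in>clin_span (gens N g Acoef K). \<forall>z. cmod z = 1 \<longrightarrow> h z = v z)"

lemma Top_span:
  assumes "i < N" "v \<in> clin_span (gens N g Acoef K)"
  shows "Top N g Acoef i v \<in> clin_span (gens N g Acoef K)"
proof -
  obtain F c where F: "finite F" "F \<subseteq> gens N g Acoef K" and v: "v = (\<lambda>z. \<Sum>x\<in>F. c x * x z)"
    using assms(2) unfolding clin_span_def by blast
  have "(\<lambda>z. \<Sum>x\<in>F. c x * Top N g Acoef i x z) \<in> clin_span (gens N g Acoef K)"
  proof (rule span_gen[OF F(1)])
    fix x assume "x \<in> F"
    then obtain w xi where "x = Tword N g Acoef w xi" "set w \<subseteq> {..<N}" "xi \<in> K"
      using F(2) unfolding gens_def by blast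
    then show "Top N g Acoef i x \<in> gens N g Acoef K"
      unfolding gens_def using assms(1)
      by (intro CollectI exI[of _ "i # w"] exI[of _ xi]) (simp add: Tword_Cons)
  qed
  moreover have "Top N g Acoef i v = (\<lambda>z. \<Sum>x\<in>F. c x * Top N g Acoef i x z)"
    unfolding v Top_def by (simp add: sum_distrib_left mult_ac)
  ultimately show ?thesis by simp
qed

lemma onV_Top:
  assumes "i < N" "onV N g Acoef K h"
  shows "onV N g Acoef K (Top N g Acoef i h)"
proof -
  obtain v where v: "v \<in> clin_span (gens N g Acoef K)" "\<And>z. cmod z = 1 \<Longrightarrow> h z = v z"
    using assms(2) unfolding onV_def by blast
  have "\<forall>z. cmod z = 1 \<longrightarrow> Top N g Acoef i h z = Top N g Acoef i v z"
    unfolding Top_def using v(2) by (simp add: norm_power)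
  then show ?thesis unfolding onV_def using Top_span[OF assms(1) v(1)] by (intro bexI[where x="Top N g Acoef i v"]) auto
qed

lemma onV_comb:
  assumes "finite J" "\<And>j. j \<in> J \<Longrightarrow> onV N g Acoef K (f j)"
  shows "onV N g Acoef K (\<lambda>z. \<Sum>j\<in>J. c j * f j z)"
proof -
  have "\<forall>j\<in>J. \<exists>v. v \<in> clin_span (gens N g Acoef K) \<and> (\<forall>z. cmod z = 1 \<longrightarrow> f j z = v z)"
    using assms(2) unfolding onV_def by blast
  from bchoice[OF this] obtain V where V0: "\<forall>j\<in>J. V j \<in> clin_span (gens N g Acoef K) \<and> (\<forall>z. cmod z = 1 \<longrightarrow> f j z = V j z)"
    by blast
  then have V: "\<And>j. j \<in> J \<Longrightarrow> V j \<in> clin_span (gens N g Acoef K)"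
    "\<And>j z. j \<in> J \<Longrightarrow> cmod z = 1 \<Longrightarrow> f j z = V j z"
    by auto
  have "(\<lambda>z. \<Sum>j\<in>J. c j * V j z) \<in> clin_span (gens N g Acoef K)"
    by (rule span_sum[OF assms(1) V(1)])
  moreover have "\<forall>z. cmod z = 1 \<longrightarrow> (\<Sum>j\<in>J. c j * f j z) = (\<Sum>j\<in>J. c j * V j z)"
    using V(2) by (auto intro!: sum.cong)
  ultimately show ?thesis unfolding onV_def by (intro bexI[where x="\<lambda>z. \<Sum>j\<in>J. c j * V j z"]) auto
qed

lemma onV_cong:
  assumes "onV N g Acoef K h'" "\<And>z. cmod z = 1 \<Longrightarrow> h z = h' z"
  shows "onV N g Acoef K h"
  using assms unfolding onV_def by metis

lemma onV_K:
  assumes "xi \<in> K"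
  shows "onV N g Acoef K xi"
proof -
  have "xi \<in> gens N g Acoef K"
    unfolding gens_def using assms by (intro CollectI exI[of _ "[]"] exI[of _ xi]) (simp add: Tword_Nil)
  then show ?thesis unfolding onV_def using span_elem by (intro bexI[where x=xi]) auto
qed

lemma onV_cuntz:
  assumes N: "N \<ge> 1"
    and loop: "\<And>z. cmod z = 1 \<Longrightarrow> unitary_mat N (\<lambda>i j. Aent Acoef g i j z)"
    and S: "\<And>i. i < N \<Longrightarrow> onV N g Acoef K (Sfun N g Acoef i n)"
  shows "onV N g Acoef K (e n)"
proof -
  have "onV N g Acoef K (\<lambda>z. \<Sum>i<N. 1 * Top N g Acoef i (Sfun N g Acoef i n) z)"
    by (rule onV_comb) (auto intro!: onV_Top S)
  then show ?thesis
    by (rule onV_cong) (simp add: cuntz[OF N loop])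
qed

definition fdist :: "nat \<Rightarrow> int \<Rightarrow> nat" where
  "fdist r0 n = nat (max n (- int r0 - n))"

lemma dist_dec:
  fixes n :: int and N g r0 q :: nat
  assumes N: "N \<ge> 2" and g: "g \<ge> 1"
    and r1: "int g * int N - 1 < (int N - 1) * (int r0 + 1)"
    and r2: "g \<le> r0"
    and pos: "0 < fdist r0 n" and q: "q < g"
  shows "fdist r0 (n div int N - int q) < fdist r0 n"
proof -
  define d where "d = n div int N"
  define j where "j = n mod int N"
  have nd: "n = int N * d + j" by (simp add: d_def j_def)
  have j0: "0 \<le> j" "j < int N" using N by (auto simp: j_def)
  define m where "m = d - int q"
  have m1: "m \<le> d" "d - int g + 1 \<le> m" using q by (auto simp: m_def)
  show ?thesis
  proof (cases "n > 0")
    case True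
    have "d \<ge> 0" using True N by (simp add: d_def pos_imp_zdiv_nonneg_iff)
    have "d < n"
    proof (rule ccontr)
      assume "\<not> d < n"
      then have "int N * d \<ge> int N * n" using N by (intro mult_left_mono) auto
      moreover have "int N * n \<ge> 2 * n" using N True by (intro mult_right_mono) auto
      ultimately have "int N * d \<ge> 2 * n" by linarith
      then show False using nd j0 True by linarith
    qed
    have "fdist r0 n = nat n" using True by (simp add: fdist_def)
    moreover have "max m (- int r0 - m) < n"
      using m1 \<open>d < n\<close> \<open>d \<ge> 0\<close> r2 True by auto
    ultimately show ?thesis using True unfolding fdist_def m_def d_def by simp
  next
    case False
    then have big: "n < - int r0"
      using pos unfolding fdist_def by auto
    have "d < 0" using big N unfolding d_def by (intro div_neg_pos_less0) auto
    have "int N * (d - int g + 1) = n - j - int g * int N + int N"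
      using nd by (simp add: algebra_simps)
    also have "\<dots> \<ge> n - int g * int N + 1" using j0 by simp
    finally have A: "int N * (d - int g + 1) \<ge> n - int g * int N + 1" .
    have "(int N - 1) * (- n) \<ge> (int N - 1) * (int r0 + 1)"
      using big N by (intro mult_left_mono) auto
    then have "n - int g * int N + 1 > int N * n"
      using r1 by (simp add: algebra_simps)
    with A have "int N * (d - int g + 1) > int N * n" by linarith
    then have "d - int g + 1 > n"
      using N by (simp add: mult_less_cancel_left)
    then have "m > n" using m1 by linarith
    have "fdist r0 n = nat (- int r0 - n)" using big by (simp add: fdist_def)
    moreover have "max m (- int r0 - m) < - int r0 - n"
      using \<open>m > n\<close> m1 \<open>d < 0\<close> big by auto
    ultimately show ?thesis using big unfolding fdist_def m_def d_def by simp
  qed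
qed

lemma onV_comb':
  assumes "finite J" "\<And>j. j \<in> J \<Longrightarrow> c j \<noteq> 0 \<Longrightarrow> onV N g Acoef K (f j)"
  shows "onV N g Acoef K (\<lambda>z. \<Sum>j\<in>J. c j * f j z)"
proof -
  have "onV N g Acoef K (\<lambda>z. \<Sum>j\<in>{j\<in>J. c j \<noteq> 0}. c j * f j z)"
    by (rule onV_comb) (use assms in auto)
  moreover have "(\<Sum>j\<in>{j\<in>J. c j \<noteq> 0}. c j * f j z) = (\<Sum>j\<in>J. c j * f j z)" for z
    using assms(1) by (simp add: sum.inter_filter) (rule sum.cong, auto)
  ultimately show ?thesis by simp
qed

lemma all_e:
  assumes N: "N \<ge> 2" and g: "g \<ge> 1"
    and loop: "\<And>z. cmod z = 1 \<Longrightarrow> unitary_mat N (\<lambda>i j. Aent Acoef g i j z)"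
    and lam: "\<And>i. i < N \<Longrightarrow> Acoef 0 i 0 = 0"
    and r1: "int g * int N - 1 < (int N - 1) * (int r0 + 1)"
    and r2: "g \<le> r0"
  shows "onV N g Acoef (clin_span {e (- int n) | n. 1 \<le> n \<and> n \<le> r0}) (e n)"
proof (induction n rule: measure_induct_rule[where f="fdist r0"])
  case (less n)
  let ?K = "clin_span {e (- int n) | n. 1 \<le> n \<and> n \<le> r0}"
  have N1: "N \<ge> 1" using N by simp
  have eK: "onV N g Acoef ?K (e (- int q))" if "1 \<le> q" "q \<le> r0" for q
    by (rule onV_K, rule span_elem) (use that in blast)
  show ?case
  proof (cases "fdist r0 n = 0")
    case True
    then have nr: "- int r0 \<le> n" "n \<le> 0" by (auto simp: fdist_def)
    show ?thesis
    proof (cases "n = 0")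
      case True
      show ?thesis unfolding True
      proof (rule onV_cuntz[OF N1 loop])
        fix i assume i: "i < N"
        have "Sfun N g Acoef i 0 = (\<lambda>u. \<Sum>q<g. cnj (Acoef q i 0) * e (- int q) u)"
          by (simp add: Sfun_def)
        moreover have "onV N g Acoef ?K (\<lambda>u. \<Sum>q<g. cnj (Acoef q i 0) * e (- int q) u)"
        proof (rule onV_comb')
          fix q assume q: "q \<in> {..<g}" "cnj (Acoef q i 0) \<noteq> 0"
          then have "q \<noteq> 0" using lam[OF i] by (metis complex_cnj_zero)
          then show "onV N g Acoef ?K (e (- int q))" using q r2 by (intro eK) auto
        qed simp
        ultimately show "onV N g Acoef ?K (Sfun N g Acoef i 0)" by simp
      qed
    next
      case False
      have "onV N g Acoef ?K (e (- int (nat (- n))))" by (rule eK) (use nr False in auto)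
      moreover have "- int (nat (- n)) = n" using nr by auto
      ultimately show ?thesis by simp
    qed
  next
    case False
    show ?thesis
    proof (rule onV_cuntz[OF N1 loop])
      fix i assume i: "i < N"
      show "onV N g Acoef ?K (Sfun N g Acoef i n)"
        unfolding Sfun_def
      proof (rule onV_comb')
        fix q assume q: "q \<in> {..<g}"
        have "fdist r0 (n div int N - int q) < fdist r0 n"
          by (rule dist_dec[OF N g r1 r2]) (use False q in auto)
        then show "onV N g Acoef ?K (e (n div int N - int q))" by (rule less)
      qed simp
    qed
  qed
qed

abbreviation M0 :: "real measure" where "M0 \<equiv> lebesgue_on {0..1}"

definition sqint :: "(real \<Rightarrow> real) \<Rightarrow> bool" where
  "sqint R \<longleftrightarrow> R \<in> borel_measurable M0 \<and> integrable M0 (\<lambda>t. (R t)\<^sup>2)"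

lemma sqint_meas: "sqint R \<Longrightarrow> R \<in> borel_measurable M0"
  by (simp add: sqint_def)

lemma sqint_int: "sqint R \<Longrightarrow> integrable M0 (\<lambda>t. (R t)\<^sup>2)"
  by (simp add: sqint_def)

lemma sq_add_le: "((a::real) + b)\<^sup>2 \<le> 2 * a\<^sup>2 + 2 * b\<^sup>2"
proof -
  have "0 \<le> (a - b)\<^sup>2" by simp
  then show ?thesis by (simp add: power2_eq_square algebra_simps)
qed

lemma sqint_add:
  assumes "sqint R1" "sqint R2"
  shows "sqint (\<lambda>t. R1 t + R2 t)"
proof -
  have m: "(\<lambda>t. R1 t + R2 t) \<in> borel_measurable M0" using assms unfolding sqint_def
    by (intro borel_measurable_add) auto
  have "integrable M0 (\<lambda>t. 2 * (R1 t)\<^sup>2 + 2 * (R2 t)\<^sup>2)"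
    using assms by (simp add: sqint_def)
  then have "integrable M0 (\<lambda>t. (R1 t + R2 t)\<^sup>2)"
    by (rule Bochner_Integration.integrable_bound) (use m sq_add_le in auto)
  then show ?thesis using m by (simp add: sqint_def)
qed

lemma sqint_scale:
  assumes "sqint R"
  shows "sqint (\<lambda>t. a * R t)"
  using assms unfolding sqint_def by (auto simp: power_mult_distrib intro: borel_measurable_times)

lemma sqint_minus: "sqint R \<Longrightarrow> sqint (\<lambda>t. - R t)"
  using sqint_scale[of R "-1"] by simp

lemma sqint_diff: "sqint R1 \<Longrightarrow> sqint R2 \<Longrightarrow> sqint (\<lambda>t. R1 t - R2 t)"
  using sqint_add[of R1 "\<lambda>t. - R2 t"] sqint_minus[of R2] by simp

lemma sqint_cont:
  assumes "continuous_on {0..1} \<psi>"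
  shows "sqint \<psi>"
  unfolding sqint_def
  by (intro conjI continuous_imp_measurable_on_sets_lebesgue continuous_imp_integrable_real
      continuous_intros assms) auto

lemma sqint_bounded:
  assumes "R \<in> borel_measurable M0" "\<And>t. t \<in> {0..1} \<Longrightarrow> \<bar>R t\<bar> \<le> B"
  shows "sqint R"
proof -
  have "integrable M0 (\<lambda>t. B\<^sup>2)" by (rule continuous_imp_integrable_real) simp
  then have "integrable M0 (\<lambda>t. (R t)\<^sup>2)"
  proof (rule Bochner_Integration.integrable_bound)
    show "(\<lambda>t. (R t)\<^sup>2) \<in> borel_measurable M0" using assms by simp
    show "AE x in M0. norm ((R x)\<^sup>2) \<le> norm (B\<^sup>2)"
      using assms(2) by (auto intro!: AE_I2) (metis abs_ge_zero power2_abs power_mono)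
  qed
  then show ?thesis using assms by (simp add: sqint_def)
qed

definition dd :: "(real \<Rightarrow> real) \<Rightarrow> (real \<Rightarrow> real) \<Rightarrow> real" where
  "dd R S = integral\<^sup>L M0 (\<lambda>t. (R t - S t)\<^sup>2)"

lemma dd_nonneg: "0 \<le> dd R S"
  unfolding dd_def by simp

lemma dd_tri:
  assumes "sqint a" "sqint b" "sqint c"
  shows "dd a c \<le> 2 * dd a b + 2 * dd b c"
proof -
  have i1: "integrable M0 (\<lambda>t. (a t - b t)\<^sup>2)" using sqint_diff[OF assms(1,2)] by (simp add: sqint_def)
  have i2: "integrable M0 (\<lambda>t. (b t - c t)\<^sup>2)" using sqint_diff[OF assms(2,3)] by (simp add: sqint_def)
  have i3: "integrable M0 (\<lambda>t. (a t - c t)\<^sup>2)" using sqint_diff[OF assms(1,3)] by (simp add: sqint_def)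
  have "dd a c \<le> integral\<^sup>L M0 (\<lambda>t. 2 * (a t - b t)\<^sup>2 + 2 * (b t - c t)\<^sup>2)"
    unfolding dd_def
  proof (rule integral_mono[OF i3])
    show "integrable M0 (\<lambda>t. 2 * (a t - b t)\<^sup>2 + 2 * (b t - c t)\<^sup>2)" using i1 i2 by simp
    show "(a t - c t)\<^sup>2 \<le> 2 * (a t - b t)\<^sup>2 + 2 * (b t - c t)\<^sup>2" for t
      using sq_add_le[of "a t - b t" "b t - c t"] by simp
  qed
  also have "\<dots> = 2 * dd a b + 2 * dd b c"
    unfolding dd_def using i1 i2 by simp
  finally show ?thesis .
qed

definition App :: "(real \<Rightarrow> real) \<Rightarrow> bool" where
  "App R \<longleftrightarrow> (\<forall>\<epsilon>>0. \<exists>\<psi>. continuous_on {0..1} \<psi> \<and> \<psi> 0 = 0 \<and> \<psi> 1 = 0 \<and> dd R \<psi> < \<epsilon>)"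

lemma App_lim:
  assumes R: "sqint R" and approx: "\<And>\<epsilon>. \<epsilon> > 0 \<Longrightarrow> \<exists>R'. sqint R' \<and> App R' \<and> dd R R' < \<epsilon>"
  shows "App R"
  unfolding App_def
proof (intro allI impI)
  fix \<epsilon> :: real assume e: "\<epsilon> > 0"
  obtain R' where R': "sqint R'" "App R'" "dd R R' < \<epsilon> / 4"
    using approx[of "\<epsilon> / 4"] e by auto
  obtain \<psi> where \<psi>: "continuous_on {0..1} \<psi>" "\<psi> 0 = 0" "\<psi> 1 = 0" "dd R' \<psi> < \<epsilon> / 4"
    using R'(2) e unfolding App_def by (meson zero_less_divide_iff zero_less_numeral)
  have "dd R \<psi> \<le> 2 * dd R R' + 2 * dd R' \<psi>"
    by (rule dd_tri[OF R R'(1) sqint_cont[OF \<psi>(1)]])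
  also have "\<dots> < \<epsilon>" using R'(3) \<psi>(4) by simp
  finally show "\<exists>\<psi>. continuous_on {0..1} \<psi> \<and> \<psi> 0 = 0 \<and> \<psi> 1 = 0 \<and> dd R \<psi> < \<epsilon>"
    using \<psi> by blast
qed

lemma dd_add:
  assumes "sqint R1" "sqint R2" "sqint S1" "sqint S2"
  shows "dd (\<lambda>t. R1 t + R2 t) (\<lambda>t. S1 t + S2 t) \<le> 2 * dd R1 S1 + 2 * dd R2 S2"
proof -
  have i1: "integrable M0 (\<lambda>t. (R1 t - S1 t)\<^sup>2)" using sqint_diff[OF assms(1,3)] by (simp add: sqint_def)
  have i2: "integrable M0 (\<lambda>t. (R2 t - S2 t)\<^sup>2)" using sqint_diff[OF assms(2,4)] by (simp add: sqint_def)
  have i3: "integrable M0 (\<lambda>t. (R1 t + R2 t - (S1 t + S2 t))\<^sup>2)"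
    using sqint_diff[OF sqint_add[OF assms(1,2)] sqint_add[OF assms(3,4)]] by (simp add: sqint_def)
  have "dd (\<lambda>t. R1 t + R2 t) (\<lambda>t. S1 t + S2 t) \<le> integral\<^sup>L M0 (\<lambda>t. 2 * (R1 t - S1 t)\<^sup>2 + 2 * (R2 t - S2 t)\<^sup>2)"
    unfolding dd_def
  proof (rule integral_mono[OF i3])
    show "integrable M0 (\<lambda>t. 2 * (R1 t - S1 t)\<^sup>2 + 2 * (R2 t - S2 t)\<^sup>2)" using i1 i2 by simp
    show "(R1 t + R2 t - (S1 t + S2 t))\<^sup>2 \<le> 2 * (R1 t - S1 t)\<^sup>2 + 2 * (R2 t - S2 t)\<^sup>2" for t
      using sq_add_le[of "R1 t - S1 t" "R2 t - S2 t"] by (simp add: algebra_simps)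
  qed
  also have "\<dots> = 2 * dd R1 S1 + 2 * dd R2 S2"
    unfolding dd_def using i1 i2 by simp
  finally show ?thesis .
qed

lemma App_add:
  assumes "sqint R1" "sqint R2" "App R1" "App R2"
  shows "App (\<lambda>t. R1 t + R2 t)"
  unfolding App_def
proof (intro allI impI)
  fix \<epsilon> :: real assume e: "\<epsilon> > 0"
  obtain \<psi>1 where p1: "continuous_on {0..1} \<psi>1" "\<psi>1 0 = 0" "\<psi>1 1 = 0" "dd R1 \<psi>1 < \<epsilon> / 4"
    using assms(3) e unfolding App_def by (meson zero_less_divide_iff zero_less_numeral)
  obtain \<psi>2 where p2: "continuous_on {0..1} \<psi>2" "\<psi>2 0 = 0" "\<psi>2 1 = 0" "dd R2 \<psi>2 < \<epsilon> / 4"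
    using assms(4) e unfolding App_def by (meson zero_less_divide_iff zero_less_numeral)
  have "dd (\<lambda>t. R1 t + R2 t) (\<lambda>t. \<psi>1 t + \<psi>2 t) \<le> 2 * dd R1 \<psi>1 + 2 * dd R2 \<psi>2"
    by (rule dd_add[OF assms(1,2) sqint_cont[OF p1(1)] sqint_cont[OF p2(1)]])
  also have "\<dots> < \<epsilon>" using p1(4) p2(4) by simp
  finally show "\<exists>\<psi>. continuous_on {0..1} \<psi> \<and> \<psi> 0 = 0 \<and> \<psi> 1 = 0 \<and> dd (\<lambda>t. R1 t + R2 t) \<psi> < \<epsilon>"
    using p1 p2 by (intro exI[of _ "\<lambda>t. \<psi>1 t + \<psi>2 t"]) (auto intro!: continuous_intros)
qed

lemma App_scale:
  assumes "App R"
  shows "App (\<lambda>t. a * R t)"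
  unfolding App_def
proof (intro allI impI)
  fix \<epsilon> :: real assume e: "\<epsilon> > 0"
  have a1: "a\<^sup>2 + 1 > 0" by (simp add: add_nonneg_pos)
  have "\<epsilon> / (a\<^sup>2 + 1) > 0" using e a1 by simp
  then obtain \<psi> where p: "continuous_on {0..1} \<psi>" "\<psi> 0 = 0" "\<psi> 1 = 0" "dd R \<psi> < \<epsilon> / (a\<^sup>2 + 1)"
    using assms unfolding App_def by blast
  have "dd (\<lambda>t. a * R t) (\<lambda>t. a * \<psi> t) = a\<^sup>2 * dd R \<psi>"
    unfolding dd_def by (simp add: right_diff_distrib[symmetric] power_mult_distrib)
  also have "\<dots> \<le> (a\<^sup>2 + 1) * dd R \<psi>" using dd_nonneg[of R \<psi>] by (simp add: mult_right_mono)
  also have "\<dots> < \<epsilon>" using p(4) a1 by (simp add: field_simps)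
  finally show "\<exists>\<psi>. continuous_on {0..1} \<psi> \<and> \<psi> 0 = 0 \<and> \<psi> 1 = 0 \<and> dd (\<lambda>t. a * R t) \<psi> < \<epsilon>"
    using p by (intro exI[of _ "\<lambda>t. a * \<psi> t"]) (auto intro!: continuous_intros)
qed

lemma App_zero: "App (\<lambda>t. 0)"
  unfolding App_def dd_def by (intro allI impI exI[of _ "\<lambda>t. 0"]) auto

lemma App_sum:
  assumes "finite J" "\<And>j. j \<in> J \<Longrightarrow> sqint (R j) \<and> App (R j)"
  shows "sqint (\<lambda>t. \<Sum>j\<in>J. R j t) \<and> App (\<lambda>t. \<Sum>j\<in>J. R j t)"
  using assms
proof (induction J rule: finite_induct)
  case empty
  then show ?case using App_zero sqint_cont[of "\<lambda>t. 0"] by simp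
next
  case (insert j J)
  then have "sqint (\<lambda>t. R j t + (\<Sum>j\<in>J. R j t)) \<and> App (\<lambda>t. R j t + (\<Sum>j\<in>J. R j t))"
    using sqint_add App_add by auto
  then show ?case using insert by simp
qed

lemma int_ind_le:
  assumes X: "X \<in> sets lebesgue" and em: "emeasure lebesgue X \<le> ennreal \<eta>" and eta: "\<eta> \<ge> 0"
  shows "integrable M0 (indicator X :: real \<Rightarrow> real) \<and> integral\<^sup>L M0 (indicator X :: real \<Rightarrow> real) \<le> \<eta>"
proof -
  have XI: "X \<inter> {0..1} \<in> sets lebesgue" using X by auto
  have sM: "X \<inter> space M0 \<in> sets M0" using XI by (simp add: sets_restrict_space_iff)
  have e1: "emeasure M0 (X \<inter> space M0) = emeasure lebesgue (X \<inter> {0..1})"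
    by (simp add: emeasure_restrict_space)
  have e2: "emeasure lebesgue (X \<inter> {0..1}) \<le> ennreal \<eta>"
    using emeasure_mono[of "X \<inter> {0..1}" X lebesgue] X em by auto
  have fin0: "emeasure lebesgue (X \<inter> {0..1}) < \<infinity>" by (rule le_less_trans[OF e2]) simp
  have fin: "emeasure M0 (X \<inter> space M0) < \<infinity>" unfolding e1 by (rule fin0)
  have int: "integrable M0 (indicator X :: real \<Rightarrow> real)"
    using sM fin by (simp add: integrable_indicator_iff)
  have "integral\<^sup>L M0 (indicator X :: real \<Rightarrow> real) = measure M0 (X \<inter> space M0)"
    by simp
  also have "\<dots> = enn2real (emeasure M0 (X \<inter> space M0))" by (simp add: measure_def)
  also have "\<dots> \<le> enn2real (ennreal \<eta>)" unfolding e1 by (rule enn2real_mono[OF e2 ennreal_less_top])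
  also have "\<dots> = \<eta>" using eta by simp
  finally show ?thesis using int by simp
qed

lemma ind_meas: "X \<in> sets lebesgue \<Longrightarrow> (indicator X :: real \<Rightarrow> real) \<in> borel_measurable M0"
  by (intro measurable_restrict_space1 borel_measurable_indicator)

lemma App_ind:
  assumes A: "A \<in> sets lebesgue"
  shows "App (indicator A)"
  unfolding App_def
proof (intro allI impI)
  fix \<epsilon> :: real assume e: "\<epsilon> > 0"
  define A' where "A' = A \<inter> {0<..<1}"
  have A': "A' \<in> sets lebesgue" using A by (auto simp: A'_def)
  obtain C where C: "closed C" "C \<subseteq> A'" "A' - C \<in> lmeasurable" "emeasure lebesgue (A' - C) < ennreal (\<epsilon> / 4)"
    using sets_lebesgue_inner_closed[OF A', of "\<epsilon> / 4"] e by auto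
  obtain U where U: "open U" "A' \<subseteq> U" "U - A' \<in> lmeasurable" "emeasure lebesgue (U - A') < ennreal (\<epsilon> / 4)"
    using sets_lebesgue_outer_open[OF A', of "\<epsilon> / 4"] e by auto
  define U' where "U' = U \<inter> {0<..<1}"
  have "open U'" using U(1) by (simp add: U'_def open_Int)
  have CU: "C \<inter> - U' = {}" using C(2) U(2) by (auto simp: U'_def A'_def)
  obtain \<psi> :: "real \<Rightarrow> real" where \<psi>: "continuous_on UNIV \<psi>" "\<And>x. \<psi> x \<in> closed_segment 1 0"
    "\<And>x. x \<in> C \<Longrightarrow> \<psi> x = 1" "\<And>x. x \<in> - U' \<Longrightarrow> \<psi> x = 0"
    using Urysohn[OF C(1) _ CU, of 1 0] \<open>open U'\<close> by (metis closed_open double_complement)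
  have \<psi>01: "0 \<le> \<psi> x \<and> \<psi> x \<le> 1" for x using \<psi>(2)[of x] by (simp add: closed_segment_eq_real_ivl)
  have p0: "\<psi> 0 = 0" "\<psi> 1 = 0" using \<psi>(4) by (auto simp: U'_def)
  define B1 where "B1 = U - A'"
  define B2 where "B2 = A' - C"
  define B3 where "B3 = ({0, 1} :: real set)"
  have B3n: "B3 \<in> null_sets lebesgue" unfolding B3_def
    by simp
  have i1: "integrable M0 (indicator B1 :: real \<Rightarrow> real) \<and> integral\<^sup>L M0 (indicator B1 :: real \<Rightarrow> real) \<le> \<epsilon> / 4"
    using U(3,4) e by (intro int_ind_le) (auto simp: B1_def)
  have i2: "integrable M0 (indicator B2 :: real \<Rightarrow> real) \<and> integral\<^sup>L M0 (indicator B2 :: real \<Rightarrow> real) \<le> \<epsilon> / 4"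
    using C(3,4) e by (intro int_ind_le) (auto simp: B2_def)
  have i3: "integrable M0 (indicator B3 :: real \<Rightarrow> real) \<and> integral\<^sup>L M0 (indicator B3 :: real \<Rightarrow> real) \<le> 0"
    using B3n by (intro int_ind_le) (auto simp: null_sets_def)
  have pw: "(indicator A t - \<psi> t)\<^sup>2 \<le> indicator B1 t + indicator B2 t + indicator B3 t"
    if t01: "t \<in> {0..1}" for t :: real
  proof (cases "t \<in> B1 \<or> t \<in> B2 \<or> t \<in> B3")
    case True
    have "(indicator A t - \<psi> t)\<^sup>2 \<le> 1"
      using \<psi>01[of t] by (auto simp: indicator_def power2_eq_square mult_le_one)
    then show ?thesis using True by (auto simp: indicator_def)
  next
    case False
    have "indicator A t - \<psi> t = 0"
    proof (cases "t \<in> A")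
      case True
      then have "t \<in> A' \<or> t \<notin> {0<..<1}" by (auto simp: A'_def)
      then show ?thesis
      proof
        assume "t \<in> A'"
        then have "t \<in> C" using False by (auto simp: B2_def)
        then show ?thesis using True \<psi>(3) by simp
      next
        assume "t \<notin> {0<..<1}"
        then have "t \<in> B3" using t01 by (auto simp: B3_def)
        then show ?thesis using False by simp
      qed
    next
      case False2: False
      then have "t \<notin> A'" by (simp add: A'_def)
      then have "t \<notin> U" using False by (auto simp: B1_def)
      then show ?thesis using False2 \<psi>(4) by (simp add: U'_def)
    qed
    then show ?thesis by (simp add: indicator_def)
  qed
  have sA: "sqint (indicator A)"
    by (rule sqint_bounded[OF ind_meas[OF A], of 1]) (auto simp: indicator_def)
  have c\<psi>: "continuous_on {0..1} \<psi>" using \<psi>(1) by (rule continuous_on_subset) simp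
  have iA: "integrable M0 (\<lambda>t. (indicator A t - \<psi> t)\<^sup>2)"
    using sqint_diff[OF sA sqint_cont[OF c\<psi>]] by (simp add: sqint_def)
  have "dd (indicator A) \<psi> \<le> integral\<^sup>L M0 (\<lambda>t. indicator B1 t + indicator B2 t + indicator B3 t)"
    unfolding dd_def
    by (rule integral_mono[OF iA]) (use i1 i2 i3 pw in auto)
  also have "\<dots> = integral\<^sup>L M0 (indicator B1 :: real \<Rightarrow> real) + integral\<^sup>L M0 (indicator B2 :: real \<Rightarrow> real)
      + integral\<^sup>L M0 (indicator B3 :: real \<Rightarrow> real)"
    using i1 i2 i3 by simp
  also have "\<dots> < \<epsilon>" using i1 i2 i3 e by linarith
  finally show "\<exists>\<psi>. continuous_on {0..1} \<psi> \<and> \<psi> 0 = 0 \<and> \<psi> 1 = 0 \<and> dd (indicator A) \<psi> < \<epsilon>"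
    using c\<psi> p0 by blast
qed

lemma App_bounded:
  assumes Rm: "R \<in> borel_measurable M0" and B: "\<And>t. t \<in> {0..1} \<Longrightarrow> \<bar>R t\<bar> \<le> B"
  shows "App R"
proof (rule App_lim)
  show sR: "sqint R" by (rule sqint_bounded[OF Rm B])
  fix \<epsilon> :: real assume e: "\<epsilon> > 0"
  obtain K :: nat where K: "K \<ge> 1" "1 / real K < \<epsilon>"
  proof -
    obtain K0 :: nat where "1 / real (Suc K0) < \<epsilon>" using e by (metis nat_approx_posE)
    then show ?thesis using that[of "Suc K0"] by simp
  qed
  have Kpos: "real K > 0" using K by simp
  define L :: int where "L = \<lceil>real K * \<bar>B\<bar>\<rceil> + 1"
  define J where "J = {-L..L}"
  define E where "E j = {t \<in> space M0. \<lfloor>real K * R t\<rfloor> = j}" for j :: int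
  note Rm[measurable]
  have EM: "E j \<in> sets M0" for j unfolding E_def by measurable
  have EL: "E j \<in> sets lebesgue" for j
    using EM[of j] by (simp add: sets_restrict_space_iff)
  define s where "s t = (\<Sum>j\<in>J. (real_of_int j / real K) * indicator (E j) t)" for t
  have sApp: "sqint s \<and> App s"
    unfolding s_def
  proof (rule App_sum)
    show "finite J" by (simp add: J_def)
    fix j assume "j \<in> J"
    have "sqint (indicator (E j))"
      by (rule sqint_bounded[OF ind_meas[OF EL[of j]], where B=1]) (auto simp: indicator_def)
    then show "sqint (\<lambda>t. real_of_int j / real K * indicator (E j) t) \<and>
               App (\<lambda>t. real_of_int j / real K * indicator (E j) t)"
      by (intro conjI sqint_scale App_scale App_ind EL)
  qed
  have seq: "s t = real_of_int \<lfloor>real K * R t\<rfloor> / real K" if t: "t \<in> {0..1}" for t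
  proof -
    have inJ: "\<lfloor>real K * R t\<rfloor> \<in> J"
    proof -
      have "\<bar>real K * R t\<bar> \<le> real K * \<bar>B\<bar>"
        using B[OF t] by (simp add: abs_mult mult_left_mono)
      then have "real K * R t \<le> real K * \<bar>B\<bar>" "- (real K * \<bar>B\<bar>) \<le> real K * R t" by linarith+
      moreover have "real K * \<bar>B\<bar> \<le> \<lceil>real K * \<bar>B\<bar>\<rceil>" by (rule le_of_int_ceiling)
      ultimately have c1: "real K * R t < of_int (\<lceil>real K * \<bar>B\<bar>\<rceil> + 1) + 1"
        and c2: "of_int (- (\<lceil>real K * \<bar>B\<bar>\<rceil> + 1)) \<le> real K * R t" by linarith+
      have "\<lfloor>real K * R t\<rfloor> \<le> \<lceil>real K * \<bar>B\<bar>\<rceil> + 1" using c1 by (simp only: floor_le_iff)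
      moreover have "- (\<lceil>real K * \<bar>B\<bar>\<rceil> + 1) \<le> \<lfloor>real K * R t\<rfloor>" using c2 by (simp only: le_floor_iff)
      ultimately show ?thesis unfolding J_def L_def by simp
    qed
    have "s t = (\<Sum>j\<in>J. if j = \<lfloor>real K * R t\<rfloor> then real_of_int j / real K else 0)"
      unfolding s_def using t by (intro sum.cong) (auto simp: E_def indicator_def)
    also have "\<dots> = real_of_int \<lfloor>real K * R t\<rfloor> / real K"
      using inJ by (simp add: sum.delta' J_def)
    finally show ?thesis .
  qed
  have close: "(R t - s t)\<^sup>2 \<le> (1 / real K)\<^sup>2" if t: "t \<in> {0..1}" for t
  proof -
    have a: "real_of_int \<lfloor>real K * R t\<rfloor> \<le> real K * R t" "real K * R t < real_of_int \<lfloor>real K * R t\<rfloor> + 1"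
      by linarith+
    have eq: "R t - s t = (real K * R t - real_of_int \<lfloor>real K * R t\<rfloor>) / real K"
      using Kpos unfolding seq[OF t] by (simp add: field_simps)
    have "0 \<le> R t - s t" unfolding eq using a Kpos by simp
    moreover have "R t - s t \<le> 1 / real K" unfolding eq
    proof (rule divide_right_mono)
      show "real K * R t - real_of_int \<lfloor>real K * R t\<rfloor> \<le> 1" using a(2) by linarith
    qed (use Kpos in auto)
    ultimately have "0 \<le> R t - s t" "R t - s t \<le> 1 / real K" by auto
    then show ?thesis by (simp add: power_mono)
  qed
  have "dd R s \<le> integral\<^sup>L M0 (\<lambda>t. (1 / real K)\<^sup>2)"
    unfolding dd_def
  proof (rule integral_mono)
    show "integrable M0 (\<lambda>t. (R t - s t)\<^sup>2)"
      using sqint_diff[OF sR] sApp by (simp add: sqint_def)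
    show "integrable M0 (\<lambda>t. (1 / real K)\<^sup>2)" by (rule continuous_imp_integrable_real) simp
    show "\<And>t. t \<in> space M0 \<Longrightarrow> (R t - s t)\<^sup>2 \<le> (1 / real K)\<^sup>2" using close by simp
  qed
  also have "\<dots> = (1 / real K)\<^sup>2" by (simp add: measure_restrict_space)
  also have "\<dots> \<le> 1 / real K" using K by (simp add: power2_eq_square field_simps)
  also have "\<dots> < \<epsilon>" by (rule K(2))
  finally show "\<exists>R'. sqint R' \<and> App R' \<and> dd R R' < \<epsilon>" using sApp by blast
qed

lemma App_all:
  assumes R: "sqint R"
  shows "App R"
proof (rule App_lim[OF R])
  fix \<epsilon> :: real assume e: "\<epsilon> > 0"
  define T where "T M t = max (- real M) (min (real M) (R t))" for M :: nat and t
  have Rm: "R \<in> borel_measurable M0" using R by (simp add: sqint_def)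
  note Rm[measurable]
  have Tm: "T M \<in> borel_measurable M0" for M unfolding T_def by measurable
  have TB: "\<bar>T M t\<bar> \<le> real M" for M t unfolding T_def by auto
  have sT: "sqint (T M)" for M by (rule sqint_bounded[OF Tm TB])
  have AT: "App (T M)" for M by (rule App_bounded[OF Tm TB])
  have lim: "(\<lambda>M. integral\<^sup>L M0 (\<lambda>t. (R t - T M t)\<^sup>2)) \<longlonglongrightarrow> integral\<^sup>L M0 (\<lambda>t. 0::real)"
  proof (rule integral_dominated_convergence[where w="\<lambda>t. (R t)\<^sup>2"])
    show "(\<lambda>t. 0::real) \<in> borel_measurable M0" by simp
    show "(\<lambda>t. (R t - T M t)\<^sup>2) \<in> borel_measurable M0" for M using Tm[of M] by measurable
    show "integrable M0 (\<lambda>t. (R t)\<^sup>2)" using R by (simp add: sqint_def)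
    show "AE t in M0. (\<lambda>M. (R t - T M t)\<^sup>2) \<longlonglongrightarrow> 0"
    proof (rule AE_I2)
      fix t
      have "eventually (\<lambda>M. (R t - T M t)\<^sup>2 = 0) sequentially"
      proof -
        obtain M0' :: nat where "\<bar>R t\<bar> \<le> real M0'" using real_arch_simple by blast
        then show ?thesis unfolding eventually_sequentially
          by (intro exI[of _ M0']) (auto simp: T_def)
      qed
      then show "(\<lambda>M. (R t - T M t)\<^sup>2) \<longlonglongrightarrow> 0" by (rule tendsto_eventually)
    qed
    show "AE t in M0. norm ((R t - T M t)\<^sup>2) \<le> (R t)\<^sup>2" for M
    proof (rule AE_I2)
      fix t
      have "\<bar>R t - T M t\<bar> \<le> \<bar>R t\<bar>" unfolding T_def by auto
      then show "norm ((R t - T M t)\<^sup>2) \<le> (R t)\<^sup>2"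
        by (simp add: abs_le_square_iff)
    qed
  qed
  then have "(\<lambda>M. dd R (T M)) \<longlonglongrightarrow> 0" by (simp add: dd_def)
  then have "eventually (\<lambda>M. dd R (T M) < \<epsilon>) sequentially"
    using e by (rule order_tendstoD)
  then obtain M where "dd R (T M) < \<epsilon>" unfolding eventually_sequentially by blast
  then show "\<exists>R'. sqint R' \<and> App R' \<and> dd R R' < \<epsilon>" using sT AT by blast
qed

definition Lau :: "(complex \<Rightarrow> complex) \<Rightarrow> bool" where
  "Lau u \<longleftrightarrow> (\<exists>v\<in>clin_span (range e). \<forall>z. cmod z = 1 \<longrightarrow> u z = v z)"

lemma Lau_e: "Lau (e n)"
  unfolding Lau_def using span_elem[of "e n" "range e"] by (intro bexI[of _ "e n"]) auto

lemma Lau_add: "Lau u1 \<Longrightarrow> Lau u2 \<Longrightarrow> Lau (\<lambda>z. u1 z + u2 z)"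
  unfolding Lau_def
proof -
  assume "\<exists>v\<in>clin_span (range e). \<forall>z. cmod z = 1 \<longrightarrow> u1 z = v z"
    "\<exists>v\<in>clin_span (range e). \<forall>z. cmod z = 1 \<longrightarrow> u2 z = v z"
  then obtain v1 v2 where "v1 \<in> clin_span (range e)" "\<forall>z. cmod z = 1 \<longrightarrow> u1 z = v1 z"
    "v2 \<in> clin_span (range e)" "\<forall>z. cmod z = 1 \<longrightarrow> u2 z = v2 z" by blast
  then show "\<exists>v\<in>clin_span (range e). \<forall>z. cmod z = 1 \<longrightarrow> u1 z + u2 z = v z"
    by (intro bexI[of _ "\<lambda>z. v1 z + v2 z"] span_add) auto
qed

lemma Lau_scale: "Lau u \<Longrightarrow> Lau (\<lambda>z. a * u z)"
  unfolding Lau_def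
proof -
  assume "\<exists>v\<in>clin_span (range e). \<forall>z. cmod z = 1 \<longrightarrow> u z = v z"
  then obtain v where "v \<in> clin_span (range e)" "\<forall>z. cmod z = 1 \<longrightarrow> u z = v z" by blast
  then show "\<exists>v\<in>clin_span (range e). \<forall>z. cmod z = 1 \<longrightarrow> a * u z = v z"
    by (intro bexI[of _ "\<lambda>z. a * v z"] span_scale) auto
qed

lemma Lau_const: "Lau (\<lambda>z. a)"
proof -
  have "Lau (\<lambda>z. a * e 0 z)" by (intro Lau_scale Lau_e)
  then show ?thesis by (simp add: e_def)
qed

lemma Lau_cong: "Lau u \<Longrightarrow> (\<And>z. cmod z = 1 \<Longrightarrow> u' z = u z) \<Longrightarrow> Lau u'"
  unfolding Lau_def by metis

lemma Lau_mult:
  assumes "Lau u1" "Lau u2"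
  shows "Lau (\<lambda>z. u1 z * u2 z)"
proof -
  obtain v1 where v1: "v1 \<in> clin_span (range e)" "\<And>z. cmod z = 1 \<Longrightarrow> u1 z = v1 z"
    using assms(1) unfolding Lau_def by blast
  obtain v2 where v2: "v2 \<in> clin_span (range e)" "\<And>z. cmod z = 1 \<Longrightarrow> u2 z = v2 z"
    using assms(2) unfolding Lau_def by blast
  obtain F1 c1 where F1: "finite F1" "F1 \<subseteq> range e" and v1e: "v1 = (\<lambda>z. \<Sum>x\<in>F1. c1 x * x z)"
    using v1(1) unfolding clin_span_def by blast
  obtain F2 c2 where F2: "finite F2" "F2 \<subseteq> range e" and v2e: "v2 = (\<lambda>z. \<Sum>x\<in>F2. c2 x * x z)"
    using v2(1) unfolding clin_span_def by blast
  define ix where "ix x = (SOME n. x = e n)" for x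
  have ix: "x = e (ix x)" if "x \<in> range e" for x
    unfolding ix_def using that by (metis (mono_tags) rangeE someI_ex)
  define f where "f p = e (ix (fst p) + ix (snd p))" for p
  have "(\<lambda>z. \<Sum>p\<in>F1 \<times> F2. (c1 (fst p) * c2 (snd p)) * f p z) \<in> clin_span (range e)"
    by (rule span_gen) (use F1 F2 in \<open>auto simp: f_def\<close>)
  moreover have eqz: "u1 z * u2 z = (\<Sum>p\<in>F1 \<times> F2. (c1 (fst p) * c2 (snd p)) * f p z)" if z: "cmod z = 1" for z
  proof -
    have z0: "z \<noteq> 0" using z by auto
    have "u1 z * u2 z = (\<Sum>x\<in>F1. c1 x * x z) * (\<Sum>y\<in>F2. c2 y * y z)"
      using v1(2)[OF z] v2(2)[OF z] by (simp add: v1e v2e)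
    also have "\<dots> = (\<Sum>x\<in>F1. \<Sum>y\<in>F2. (c1 x * c2 y) * (x z * y z))"
      by (simp add: sum_product mult_ac)
    also have "\<dots> = (\<Sum>p\<in>F1 \<times> F2. (c1 (fst p) * c2 (snd p)) * (fst p z * snd p z))"
      by (simp add: sum.cartesian_product case_prod_beta)
    also have "\<dots> = (\<Sum>p\<in>F1 \<times> F2. (c1 (fst p) * c2 (snd p)) * f p z)"
    proof (rule sum.cong[OF refl])
      fix p assume "p \<in> F1 \<times> F2"
      then have "fst p = e (ix (fst p))" "snd p = e (ix (snd p))" using F1 F2 ix by auto
      then have "fst p z * snd p z = e (ix (fst p)) z * e (ix (snd p)) z" by metis
      also have "\<dots> = f p z" using z0 by (simp add: f_def e_def power_int_add)
      finally show "(c1 (fst p) * c2 (snd p)) * (fst p z * snd p z) = (c1 (fst p) * c2 (snd p)) * f p z"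
        by simp
    qed
    finally show ?thesis .
  qed
  ultimately show ?thesis unfolding Lau_def
    by (intro bexI[where x="\<lambda>z. \<Sum>p\<in>F1 \<times> F2. (c1 (fst p) * c2 (snd p)) * f p z"] allI impI eqz)
qed

lemma unit_inv: "cmod z = 1 \<Longrightarrow> inverse z = cnj z"
proof (rule inverse_unique)
  assume "cmod z = 1"
  moreover have "z * cnj z = complex_of_real ((cmod z)\<^sup>2)" by (rule complex_norm_square[symmetric])
  ultimately show "z * cnj z = 1" by simp
qed

lemma e_m1: "cmod z = 1 \<Longrightarrow> e (-1) z = cnj z"
  by (simp add: e_def power_int_minus unit_inv)

lemma e_1: "e 1 z = z"
  by (simp add: e_def)

lemma Lau_Re: "Lau (\<lambda>z. complex_of_real (Re z))"
proof -
  have "Lau (\<lambda>z. (1/2) * e 1 z + (1/2) * e (-1) z)" by (intro Lau_add Lau_scale Lau_e)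
  moreover have "complex_of_real (Re z) = (1/2) * e 1 z + (1/2) * e (-1) z" if "cmod z = 1" for z
  proof -
    have "(1/2) * e 1 z + (1/2) * e (-1) z = (z + cnj z) / 2" using that by (simp add: e_1 e_m1 field_simps)
    also have "\<dots> = complex_of_real (Re z)" by (simp add: complex_add_cnj)
    finally show ?thesis by simp
  qed
  ultimately show ?thesis by (rule Lau_cong)
qed

lemma Lau_Im: "Lau (\<lambda>z. complex_of_real (Im z))"
proof -
  have "Lau (\<lambda>z. (1/(2*\<i>)) * e 1 z + (- 1/(2*\<i>)) * e (-1) z)" by (intro Lau_add Lau_scale Lau_e)
  moreover have "complex_of_real (Im z) = (1/(2*\<i>)) * e 1 z + (- 1/(2*\<i>)) * e (-1) z" if "cmod z = 1" for z
  proof -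
    have "(1/(2*\<i>)) * e 1 z + (- 1/(2*\<i>)) * e (-1) z = (z - cnj z) / (2*\<i>)" using that
      by (simp add: e_1 e_m1 field_simps)
    also have "\<dots> = complex_of_real (Im z)"
      by (simp add: complex_diff_cnj, (metis complex_i_mult_minus mult.commute minus_minus))
    finally show ?thesis by simp
  qed
  ultimately show ?thesis by (rule Lau_cong)
qed

lemma Lau_rpf:
  assumes "real_polynomial_function h"
  shows "Lau (\<lambda>z. complex_of_real (h z))"
  using assms
proof (induction h rule: real_polynomial_function.induct)
  case (linear h)
  then have lin: "linear h" by (rule bounded_linear.linear)
  have eq: "h z = Re z * h 1 + Im z * h \<i>" for z
  proof -
    have "z = Re z *\<^sub>R 1 + Im z *\<^sub>R \<i>" by (simp add: complex_eq_iff)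
    then have "h z = h (Re z *\<^sub>R 1 + Im z *\<^sub>R \<i>)" by simp
    also have "\<dots> = Re z * h 1 + Im z * h \<i>"
      using lin by (simp add: linear_add linear_scale)
    finally show ?thesis .
  qed
  have "Lau (\<lambda>z. complex_of_real (h 1) * complex_of_real (Re z) + complex_of_real (h \<i>) * complex_of_real (Im z))"
    by (intro Lau_add Lau_scale Lau_Re Lau_Im)
  then show ?case
  proof (rule Lau_cong)
    fix z :: complex
    show "complex_of_real (h z) = complex_of_real (h 1) * complex_of_real (Re z) + complex_of_real (h \<i>) * complex_of_real (Im z)"
      by (simp only: eq[of z] of_real_add of_real_mult mult.commute)
  qed
next
  case (const c)
  then show ?case by (rule Lau_const)
next
  case (add f g)
  then show ?case by (simp add: Lau_add)
next
  case (mult f g)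
  then show ?case by (simp add: Lau_mult)
qed

lemma Lau_pf:
  assumes "polynomial_function P"
  shows "Lau P"
proof -
  have "real_polynomial_function (Re \<circ> P)" "real_polynomial_function (Im \<circ> P)"
    using assms unfolding polynomial_function_def by (auto intro: bounded_linear_Re bounded_linear_Im)
  then have "Lau (\<lambda>z. complex_of_real (Re (P z)))" "Lau (\<lambda>z. complex_of_real (Im (P z)))"
    using Lau_rpf by (auto simp: o_def)
  then have "Lau (\<lambda>z. complex_of_real (Re (P z)) + \<i> * complex_of_real (Im (P z)))"
    by (intro Lau_add Lau_scale)
  then show ?thesis by (rule Lau_cong) (simp add: complex_eq_iff)
qed

lemma circle_cont:
  fixes \<phi> :: "real \<Rightarrow> complex"
  assumes c: "continuous_on {0..1} \<phi>" and p: "\<phi> 0 = \<phi> 1"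
  shows "continuous_on (sphere 0 1) (\<lambda>z. \<phi> (Arg2pi z / (2 * pi)))"
proof -
  define j where "j z = (if 0 \<le> Im z then \<phi> (Arg2pi z / (2 * pi)) else \<phi> (1 - Arg2pi (cnj z) / (2 * pi)))" for z
  have Arg2pi_eq: "1 - Arg2pi (cnj y) / (2 * pi) = Arg2pi y / (2 * pi) \<or> Arg2pi y = 0 \<and> Arg2pi (cnj y) = 0"
    if "cmod y = 1" for y
    using that Arg2pi_eq_0_pi Arg2pi_eq_pi by (force simp: Arg2pi_cnj field_split_simps)
  have le2: "Arg2pi z \<le> 2 * pi" for z by (simp add: Arg2pi order_le_less)
  let ?S = "sphere (0::complex) 1 \<inter> {z. 0 \<le> Im z}"
  let ?T = "sphere (0::complex) 1 \<inter> {z. Im z \<le> 0}"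
  have c1: "continuous_on ?S (\<lambda>z. \<phi> (Arg2pi z / (2 * pi)))"
  proof (rule continuous_on_compose2[OF c])
    show "continuous_on ?S (\<lambda>z. Arg2pi z / (2 * pi))"
      by (intro continuous_intros continuous_on_subset[OF continuous_on_upperhalf_Arg2pi]) auto
    show "(\<lambda>z. Arg2pi z / (2 * pi)) ` ?S \<subseteq> {0..1}"
      using le2 by (auto simp: Arg2pi)
  qed
  have c2: "continuous_on ?T (\<lambda>z. \<phi> (1 - Arg2pi (cnj z) / (2 * pi)))"
  proof (rule continuous_on_compose2[OF c])
    have "continuous_on ?T (\<lambda>z. Arg2pi (cnj z))"
      by (rule continuous_on_compose2[OF continuous_on_upperhalf_Arg2pi]) (auto intro!: continuous_intros)
    then show "continuous_on ?T (\<lambda>z. 1 - Arg2pi (cnj z) / (2 * pi))"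
      by (intro continuous_intros) auto
    show "(\<lambda>z. 1 - Arg2pi (cnj z) / (2 * pi)) ` ?T \<subseteq> {0..1}"
      using le2 by (auto simp: Arg2pi)
  qed
  have ST: "sphere (0::complex) 1 = ?S \<union> ?T" by auto
  have cj': "continuous_on (?S \<union> ?T) j"
    unfolding j_def
  proof (rule continuous_on_cases_local[OF _ _ c1 c2])
    show "closedin (top_of_set (?S \<union> ?T)) ?S"
      by (rule closed_subset) (auto intro!: closed_Int closed_halfspace_Im_ge)
    show "closedin (top_of_set (?S \<union> ?T)) ?T"
      by (rule closed_subset) (auto intro!: closed_Int closed_halfspace_Im_le)
    fix x assume "x \<in> ?S \<and> \<not> 0 \<le> Im x \<or> x \<in> ?T \<and> 0 \<le> Im x"
    then have "x \<in> sphere 0 1" "Im x = 0" by auto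
    then show "\<phi> (Arg2pi x / (2 * pi)) = \<phi> (1 - Arg2pi (cnj x) / (2 * pi))"
      using Arg2pi_eq[of x] p by (auto simp: dist_norm)
  qed
  have cj: "continuous_on (sphere 0 1) j"
    by (rule continuous_on_subset[OF cj']) auto
  show ?thesis
  proof (rule continuous_on_eq[OF cj])
    fix z :: complex assume "z \<in> sphere 0 1"
    then have "cmod z = 1" by simp
    then show "j z = \<phi> (Arg2pi z / (2 * pi))"
      using Arg2pi_eq[of z] p by (auto simp: j_def)
  qed
qed

lemma Arg2pi_circ:
  assumes "t \<in> {0..<1}"
  shows "Arg2pi (circ t) = 2 * pi * t"
proof (rule Arg2pi_unique)
  show "complex_of_real 1 * exp (\<i> * complex_of_real (2 * pi * t)) = circ t"
    by (simp add: circ_def cis_conv_exp)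
qed (use assms in auto)

lemma circ_approx:
  fixes \<phi> :: "real \<Rightarrow> complex"
  assumes c: "continuous_on {0..1} \<phi>" and p: "\<phi> 0 = \<phi> 1" and d: "\<delta> > 0"
  shows "\<exists>u. Lau u \<and> (\<forall>t\<in>{0..1}. cmod (\<phi> t - u (circ t)) < \<delta>)"
proof -
  obtain P where P: "polynomial_function P" "\<forall>z\<in>sphere 0 1. norm (\<phi> (Arg2pi z / (2 * pi)) - P z) < \<delta>"
    using Stone_Weierstrass_polynomial_function[OF compact_sphere circle_cont[OF c p] d] by blast
  have "cmod (\<phi> t - P (circ t)) < \<delta>" if t: "t \<in> {0..1}" for t
  proof -
    have "\<phi> (Arg2pi (circ t) / (2 * pi)) = \<phi> t"
    proof (cases "t = 1")
      case True
      have "circ 1 = 1" by (simp add: circ_def)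
      moreover have "Arg2pi 1 = 0" using Arg2pi_of_real[of 1] by simp
      ultimately show ?thesis using True p by simp
    next
      case False
      then show ?thesis using t by (simp add: Arg2pi_circ)
    qed
    moreover have "circ t \<in> sphere 0 1" by simp
    then have "cmod (\<phi> (Arg2pi (circ t) / (2 * pi)) - P (circ t)) < \<delta>" using P(2) by blast
    ultimately show ?thesis by simp
  qed
  then show ?thesis using Lau_pf[OF P(1)] by blast
qed

lemma density:
  assumes f: "f \<in> L2T" and e: "\<epsilon> > 0"
  shows "\<exists>u. Lau u \<and> l2_norm (\<lambda>z. f z - u z) < \<epsilon>"
proof -
  define F0 where "F0 t = f (circ t)" for t
  have F0m: "F0 \<in> borel_measurable M0" and F0i: "integrable M0 (\<lambda>t. (cmod (F0 t))\<^sup>2)"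
  proof -
    have F0eq: "F0 = (\<lambda>t. f (circ t))" by (simp add: fun_eq_iff F0_def)
    show "F0 \<in> borel_measurable M0" "integrable M0 (\<lambda>t. (cmod (F0 t))\<^sup>2)"
      using f unfolding F0eq by (auto simp: L2T_def)
  qed
  note F0m[measurable]
  define R1 where "R1 t = Re (F0 t)" for t
  define R2 where "R2 t = Im (F0 t)" for t
  have sR1: "sqint R1"
    unfolding sqint_def
  proof
    show m: "R1 \<in> borel_measurable M0" unfolding R1_def by measurable
    show "integrable M0 (\<lambda>t. (R1 t)\<^sup>2)"
    proof (rule Bochner_Integration.integrable_bound[OF F0i])
      show "(\<lambda>t. (R1 t)\<^sup>2) \<in> borel_measurable M0" using m by measurable
      show "AE t in M0. norm ((R1 t)\<^sup>2) \<le> norm ((cmod (F0 t))\<^sup>2)"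
        by (rule AE_I2) (simp add: R1_def cmod_power2)
    qed
  qed
  have sR2: "sqint R2"
    unfolding sqint_def
  proof
    show m: "R2 \<in> borel_measurable M0" unfolding R2_def by measurable
    show "integrable M0 (\<lambda>t. (R2 t)\<^sup>2)"
    proof (rule Bochner_Integration.integrable_bound[OF F0i])
      show "(\<lambda>t. (R2 t)\<^sup>2) \<in> borel_measurable M0" using m by measurable
      show "AE t in M0. norm ((R2 t)\<^sup>2) \<le> norm ((cmod (F0 t))\<^sup>2)"
        by (rule AE_I2) (simp add: R2_def cmod_power2)
    qed
  qed
  define \<eta> where "\<eta> = \<epsilon>\<^sup>2 / 16"
  have eta: "\<eta> > 0" using e by (simp add: \<eta>_def)
  obtain \<psi>1 where p1: "continuous_on {0..1} \<psi>1" "\<psi>1 0 = 0" "\<psi>1 1 = 0" "dd R1 \<psi>1 < \<eta>"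
    using App_all[OF sR1] eta unfolding App_def by blast
  obtain \<psi>2 where p2: "continuous_on {0..1} \<psi>2" "\<psi>2 0 = 0" "\<psi>2 1 = 0" "dd R2 \<psi>2 < \<eta>"
    using App_all[OF sR2] eta unfolding App_def by blast
  define \<phi> where "\<phi> t = complex_of_real (\<psi>1 t) + \<i> * complex_of_real (\<psi>2 t)" for t
  have c\<phi>: "continuous_on {0..1} \<phi>" unfolding \<phi>_def using p1(1) p2(1) by (intro continuous_intros)
  have p\<phi>: "\<phi> 0 = \<phi> 1" using p1 p2 by (simp add: \<phi>_def)
  define \<delta> where "\<delta> = \<epsilon> / 4"
  have d: "\<delta> > 0" using e by (simp add: \<delta>_def)
  obtain u where u: "Lau u" "\<And>t. t \<in> {0..1} \<Longrightarrow> cmod (\<phi> t - u (circ t)) < \<delta>"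
    using circ_approx[OF c\<phi> p\<phi> d] by blast
  obtain v where v: "v \<in> clin_span (range e)" "\<And>z. cmod z = 1 \<Longrightarrow> u z = v z"
    using u(1) unfolding Lau_def by blast
  have cv: "ccirc v" by (rule ccirc_clin_span[OF _ v(1)]) (auto simp: ccirc_e)
  define U where "U t = u (circ t)" for t
  have Ueq: "U = (\<lambda>t. v (circ t))" unfolding U_def using v(2) by auto
  have cU: "continuous_on UNIV U" using cv unfolding Ueq ccirc_def .
  have cU01: "continuous_on {0..1} U" using cU by (rule continuous_on_subset) simp
  have Um: "U \<in> borel_measurable M0"
    by (rule continuous_imp_measurable_on_sets_lebesgue[OF cU01]) simp
  note Um[measurable]
  have i1: "integrable M0 (\<lambda>t. (R1 t - \<psi>1 t)\<^sup>2)"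
    using sqint_diff[OF sR1 sqint_cont[OF p1(1)]] by (simp add: sqint_def)
  have i2: "integrable M0 (\<lambda>t. (R2 t - \<psi>2 t)\<^sup>2)"
    using sqint_diff[OF sR2 sqint_cont[OF p2(1)]] by (simp add: sqint_def)
  have i3: "integrable M0 (\<lambda>t. (cmod (\<phi> t - U t))\<^sup>2)"
    by (rule continuous_imp_integrable_real) (intro continuous_intros c\<phi> cU01)
  define G where "G t = 2 * ((R1 t - \<psi>1 t)\<^sup>2 + (R2 t - \<psi>2 t)\<^sup>2) + 2 * (cmod (\<phi> t - U t))\<^sup>2" for t
  have iG: "integrable M0 G" unfolding G_def using i1 i2 i3 by simp
  have pw: "(cmod (F0 t - U t))\<^sup>2 \<le> G t" for t
  proof -
    have "(cmod (F0 t - U t))\<^sup>2 = (cmod ((F0 t - \<phi> t) + (\<phi> t - U t)))\<^sup>2" by simp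
    also have "\<dots> \<le> (cmod (F0 t - \<phi> t) + cmod (\<phi> t - U t))\<^sup>2"
      by (rule power_mono[OF norm_triangle_ineq]) simp
    also have "\<dots> \<le> 2 * (cmod (F0 t - \<phi> t))\<^sup>2 + 2 * (cmod (\<phi> t - U t))\<^sup>2" by (rule sq_add_le)
    also have "(cmod (F0 t - \<phi> t))\<^sup>2 = (R1 t - \<psi>1 t)\<^sup>2 + (R2 t - \<psi>2 t)\<^sup>2"
      by (simp add: cmod_power2 R1_def R2_def \<phi>_def)
    finally show ?thesis by (simp add: G_def)
  qed
  have iFU: "integrable M0 (\<lambda>t. (cmod (F0 t - U t))\<^sup>2)"
  proof (rule Bochner_Integration.integrable_bound[OF iG])
    show "(\<lambda>t. (cmod (F0 t - U t))\<^sup>2) \<in> borel_measurable M0" by measurable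
    show "AE t in M0. norm ((cmod (F0 t - U t))\<^sup>2) \<le> norm (G t)"
      using pw by (intro AE_I2) (auto intro: order_trans[OF _ abs_ge_self])
  qed
  have "integral\<^sup>L M0 (\<lambda>t. (cmod (F0 t - U t))\<^sup>2) \<le> integral\<^sup>L M0 G"
    by (rule integral_mono[OF iFU iG pw])
  also have "integral\<^sup>L M0 G = 2 * (dd R1 \<psi>1 + dd R2 \<psi>2) + 2 * integral\<^sup>L M0 (\<lambda>t. (cmod (\<phi> t - U t))\<^sup>2)"
    unfolding G_def dd_def using i1 i2 i3 by simp
  also have "integral\<^sup>L M0 (\<lambda>t. (cmod (\<phi> t - U t))\<^sup>2) \<le> integral\<^sup>L M0 (\<lambda>t. \<delta>\<^sup>2)"
  proof (rule integral_mono[OF i3])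
    show "integrable M0 (\<lambda>t. \<delta>\<^sup>2)" by (rule continuous_imp_integrable_real) simp
    fix t assume "t \<in> space M0"
    then have "cmod (\<phi> t - U t) < \<delta>" using u(2) by (simp add: U_def)
    then show "(cmod (\<phi> t - U t))\<^sup>2 \<le> \<delta>\<^sup>2" by (intro power_mono) auto
  qed
  also have "integral\<^sup>L M0 (\<lambda>t. \<delta>\<^sup>2) = \<delta>\<^sup>2" by (simp add: measure_restrict_space)
  finally have bound: "integral\<^sup>L M0 (\<lambda>t. (cmod (F0 t - U t))\<^sup>2) \<le> 2 * (dd R1 \<psi>1 + dd R2 \<psi>2) + 2 * \<delta>\<^sup>2"
    by simp
  have "2 * (dd R1 \<psi>1 + dd R2 \<psi>2) + 2 * \<delta>\<^sup>2 < \<epsilon>\<^sup>2"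
  proof -
    have "2 * (dd R1 \<psi>1 + dd R2 \<psi>2) < 4 * \<eta>" using p1(4) p2(4) by simp
    moreover have "2 * \<delta>\<^sup>2 = \<epsilon>\<^sup>2 / 8" by (simp add: \<delta>_def power2_eq_square)
    moreover have "4 * \<eta> = \<epsilon>\<^sup>2 / 4" by (simp add: \<eta>_def)
    moreover have "\<epsilon>\<^sup>2 > 0" using e by simp
    ultimately show ?thesis by linarith
  qed
  with bound have lt: "integral\<^sup>L M0 (\<lambda>t. (cmod (F0 t - U t))\<^sup>2) < \<epsilon>\<^sup>2" by linarith
  have "l2_norm (\<lambda>z. f z - u z) = sqrt (integral\<^sup>L M0 (\<lambda>t. (cmod (F0 t - U t))\<^sup>2))"
    by (simp add: l2_norm_def F0_def U_def)
  also have "\<dots> < sqrt (\<epsilon>\<^sup>2)" using lt by (simp only: real_sqrt_less_iff)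
  also have "\<dots> = \<epsilon>" using e by simp
  finally show ?thesis using u(1) by blast
qed

lemma r0_facts:
  fixes N g :: nat
  assumes N: "N \<ge> 2" and g: "g \<ge> 1"
  defines "r0 \<equiv> (g * N - 1) div (N - 1)"
  shows "int g * int N - 1 < (int N - 1) * (int r0 + 1)" "g \<le> r0" "r0 \<ge> 1"
proof -
  have N1: "N - 1 > 0" using N by simp
  have gN: "g * N \<ge> 1" using N g by (simp add: one_le_mult_iff)
  have "g * N - 1 = (N - 1) * r0 + (g * N - 1) mod (N - 1)"
    unfolding r0_def by simp
  moreover have "(g * N - 1) mod (N - 1) < N - 1" using N1 by simp
  moreover have "(N - 1) * (r0 + 1) = (N - 1) * r0 + (N - 1)" by (simp add: distrib_left)
  ultimately have "g * N - 1 < (N - 1) * (r0 + 1)" by linarith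
  then have lt: "int (g * N - 1) < int ((N - 1) * (r0 + 1))" by (simp only: of_nat_less_iff)
  have A: "int (g * N - 1) = int g * int N - 1" using gN by (simp add: of_nat_diff)
  moreover have B: "int ((N - 1) * (r0 + 1)) = (int N - 1) * (int r0 + 1)"
  proof -
    have "int (N - 1) = int N - 1" using N by simp
    then show ?thesis by (simp only: of_nat_mult of_nat_add of_nat_1)
  qed
  show "int g * int N - 1 < (int N - 1) * (int r0 + 1)" using lt unfolding A B .
  have "g * (N - 1) \<le> g * N - 1" using g N by (simp add: right_diff_distrib')
  then show "g \<le> r0" unfolding r0_def using N1 by (simp add: less_eq_div_iff_mult_less_eq)
  then show "r0 \<ge> 1" using g by simp
qed

theorem corollary6p4:
  fixes N g :: nat and Acoef :: "nat \<Rightarrow> nat \<Rightarrow> nat \<Rightarrow> complex"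
  assumes N: "N \<ge> 2" and g: "g \<ge> 1"
    and loop: "\<And>z. cmod z = 1 \<Longrightarrow> unitary_mat N (\<lambda>i j. Aent Acoef g i j z)"
    and top: "\<exists>i<N. \<exists>j<N. Acoef (g - 1) i j \<noteq> 0"
  defines "r0 \<equiv> (g * N - 1) div (N - 1)"
  defines "K0 \<equiv> clin_span {e (- int n) | n. 1 \<le> n \<and> n \<le> r0}"
  defines "K1 \<equiv> clin_span {e (- int n) | n. n \<le> r0 - 1}"
  shows "((\<forall>i<N. adj_eigvec (Top N g Acoef i) (e 0)) \<longrightarrow> \<not> cyclic N g Acoef K0)
       \<and> (((N - 1) dvd (g * N - 1) \<and> (\<forall>i<N. adj_eigvec (Top N g Acoef i) (e (- int r0))))
            \<longrightarrow> \<not> cyclic N g Acoef K1)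
       \<and> ((\<Sum>i<N. (cmod (Acoef 0 i 0))\<^sup>2) = 0 \<longrightarrow> cyclic N g Acoef K0)"
proof (intro conjI impI)
  have rf: "int g * int N - 1 < (int N - 1) * (int r0 + 1)" "g \<le> r0" "r0 \<ge> 1"
    using r0_facts[OF N g] unfolding r0_def by auto
  show "\<not> cyclic N g Acoef K0" if "\<forall>i<N. adj_eigvec (Top N g Acoef i) (e 0)"
    unfolding K0_def by (rule part1[OF that])
  show "\<not> cyclic N g Acoef K1"
    if "(N - 1) dvd (g * N - 1) \<and> (\<forall>i<N. adj_eigvec (Top N g Acoef i) (e (- int r0)))"
    unfolding K1_def by (rule part2) (use that rf in auto)
  assume lam0: "(\<Sum>i<N. (cmod (Acoef 0 i 0))\<^sup>2) = 0"
  have lam: "Acoef 0 i 0 = 0" if "i < N" for i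
  proof -
    have "\<forall>i\<in>{..<N}. (cmod (Acoef 0 i 0))\<^sup>2 = 0"
      using lam0 by (subst sum_nonneg_eq_0_iff[symmetric]) auto
    then show ?thesis using that by simp
  qed
  have alle: "onV N g Acoef K0 (e n)" for n
    unfolding K0_def by (rule all_e[OF N g loop lam rf(1) rf(2)])
  show "cyclic N g Acoef K0"
    unfolding cyclic_def
  proof (intro ballI allI impI)
    fix f :: "complex \<Rightarrow> complex" and \<epsilon> :: real
    assume f: "f \<in> L2T" and e: "\<epsilon> > 0"
    obtain u where u: "Lau u" "l2_norm (\<lambda>z. f z - u z) < \<epsilon>"
      using density[OF f e] by blast
    obtain v where v: "v \<in> clin_span (range e)" "\<And>z. cmod z = 1 \<Longrightarrow> u z = v z"
      using u(1) unfolding Lau_def by blast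
    obtain F c where F: "finite F" "F \<subseteq> range e" and vF: "v = (\<lambda>z. \<Sum>x\<in>F. c x * x z)"
      using v(1) unfolding clin_span_def by blast
    have "onV N g Acoef K0 (\<lambda>z. \<Sum>x\<in>F. c x * x z)"
    proof (rule onV_comb[OF F(1)])
      fix x assume "x \<in> F"
      then obtain n where "x = e n" using F(2) by blast
      then show "onV N g Acoef K0 x" using alle by simp
    qed
    then obtain h where h: "h \<in> clin_span (gens N g Acoef K0)" "\<And>z. cmod z = 1 \<Longrightarrow> v z = h z"
      unfolding onV_def vF by blast
    have "l2_norm (\<lambda>z. f z - h z) = l2_norm (\<lambda>z. f z - u z)"
      unfolding l2_norm_def using v(2) h(2) by simp
    then have "l2_norm (\<lambda>z. f z - h z) < \<epsilon>" using u(2) by simp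
    moreover have "h \<in> clin_span {Tword N g Acoef w xi | w xi. set w \<subseteq> {..<N} \<and> xi \<in> K0}"
      using h(1) by (simp add: gens_def)
    ultimately show "\<exists>h\<in>clin_span {Tword N g Acoef w xi | w xi. set w \<subseteq> {..<N} \<and> xi \<in> K0}.
        l2_norm (\<lambda>z. f z - h z) < \<epsilon>" by blast
  qed
qed

end
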